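(* Let $a<b$, $L=b-a$, $h>0$. There exist constants $c_0,C>0$, independent of $h$, such that for every $\theta_0\in\mathbb C$ with $|\theta_0|\le c_0$ the operator $W_{\theta_0}$ is bounded on $L^2(\mathbb R)$ and $\|W_{\theta_0}-\mathrm{Id}\|_{\mathcal L(L^2(\mathbb R))}\le C|\theta_0|$; i.e. $W_{\theta_0}-\mathrm{Id}=\mathcal O(|\theta_0|)$ in operator norm.
   Context: Set $c_\pm(\theta_0)=e^{\theta_0/2}\pm e^{\frac32\theta_0}$ and $d(\theta_0,k)=c_+(\theta_0)^2e^{-ikL/h}-c_-(\theta_0)^2e^{ikL/h}$. For $k>0$ let $A(k)=2c_+e^{-ikL/h}/d$, $B(k)=-2c_-e^{2ika/h}e^{ikL/h}/d$, $T(k)=e^{-ikL/h}(c_+^2-c_-^2)/d$, $R(k)=-2ic_+c_-e^{2ika/h}\sin(kL/h)/d$, and define $\psi_-(k,x)=e^{ikx/h}+R(k)e^{-ikx/h}$ for $x<a$, $A(k)e^{ikx/h}+B(k)e^{-ikx/h}$ for $x\in(a,b)$, $T(k)e^{ikx/h}$ for $x>b$. For $k<0$ let $\tilde A(k)=A(-k)$, $\tilde B(k)=e^{4ika/h}e^{2ikL/h}B(-k)$, $\tilde T(k)=T(-k)$, $\tilde R(k)=e^{4ika/h}e^{2ikL/h}R(-k)$, and $\psi_-(k,x)=\tilde T(k)e^{ikx/h}$ for $x<a$, $\tilde A(k)e^{ikx/h}+\tilde B(k)e^{-ikx/h}$ for $x\in(a,b)$, $e^{ikx/h}+\tilde R(k)e^{-ikx/h}$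 for $x>b$. ($\psi_-(k,\cdot)$ are the generalized eigenfunctions of $-h^2\partial_x^2$ with the interface conditions $e^{-\theta_0/2}u(b^+)=u(b^-)$, $e^{-\frac32\theta_0}u'(b^+)=u'(b^-)$, $e^{-\theta_0/2}u(a^-)=u(a^+)$, $e^{-\frac32\theta_0}u'(a^-)=u'(a^+)$.) $W_{\theta_0}$ is the operator with integral kernel $W_{\theta_0}(x,y)=\int_{-\infty}^{+\infty}\psi_-(k,x)e^{-iky/h}\frac{dk}{2\pi h}$, i.e. $W_{\theta_0}u(x)=\int\psi_-(k,x)(\mathcal Fu)(k)\frac{dk}{(2\pi h)^{1/2}}$ with $\mathcal Fu(k)=\int u(y)e^{-iky/h}\frac{dy}{(2\pi h)^{1/2}}$. *)

theory Defs
  imports "HOL-Analysis.Analysis"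
begin

definition cp :: "complex \<Rightarrow> complex" where
  "cp \<theta> = exp (\<theta>/2) + exp (3/2*\<theta>)"
definition cm :: "complex \<Rightarrow> complex" where
  "cm \<theta> = exp (\<theta>/2) - exp (3/2*\<theta>)"

definition ei :: "real \<Rightarrow> complex" where
  "ei t = exp (\<i> * of_real t)"

definition dd :: "real \<Rightarrow> real \<Rightarrow> real \<Rightarrow> complex \<Rightarrow> real \<Rightarrow> complex" where
  "dd a b h \<theta> k = (cp \<theta>)^2 * ei (- k*(b-a)/h) - (cm \<theta>)^2 * ei (k*(b-a)/h)"

definition AA :: "real \<Rightarrow> real \<Rightarrow> real \<Rightarrow> complex \<Rightarrow> real \<Rightarrow> complex" where
  "AA a b h \<theta> k = 2 * cp \<theta> * ei (- k*(b-a)/h) / dd a b h \<theta> k"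
definition BB :: "real \<Rightarrow> real \<Rightarrow> real \<Rightarrow> complex \<Rightarrow> real \<Rightarrow> complex" where
  "BB a b h \<theta> k = - 2 * cm \<theta> * ei (2*k*a/h) * ei (k*(b-a)/h) / dd a b h \<theta> k"
definition TT :: "real \<Rightarrow> real \<Rightarrow> real \<Rightarrow> complex \<Rightarrow> real \<Rightarrow> complex" where
  "TT a b h \<theta> k = ei (- k*(b-a)/h) * ((cp \<theta>)^2 - (cm \<theta>)^2) / dd a b h \<theta> k"
definition RR :: "real \<Rightarrow> real \<Rightarrow> real \<Rightarrow> complex \<Rightarrow> real \<Rightarrow> complex" where
  "RR a b h \<theta> k = - 2 * \<i> * cp \<theta> * cm \<theta> * ei (2*k*a/h)
      * of_real (sin (k*(b-a)/h)) / dd a b h \<theta> k"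

text \<open>Generalized eigenfunctions psi_-(k,x). The values at k = 0 and at x = a, x = b
  (null sets) are fixed by an arbitrary convention.\<close>
definition psi :: "real \<Rightarrow> real \<Rightarrow> real \<Rightarrow> complex \<Rightarrow> real \<Rightarrow> real \<Rightarrow> complex" where
  "psi a b h \<theta> k x =
    (if k > 0 then
       (if x < a then ei (k*x/h) + RR a b h \<theta> k * ei (- k*x/h)
        else if x < b then AA a b h \<theta> k * ei (k*x/h) + BB a b h \<theta> k * ei (- k*x/h)
        else TT a b h \<theta> k * ei (k*x/h))
     else
       (let At = AA a b h \<theta> (-k);
            Bt = ei (4*k*a/h) * ei (2*k*(b-a)/h) * BB a b h \<theta> (-k);
            Tt = TT a b h \<theta> (-k);
            Rt = ei (4*k*a/h) * ei (2*k*(b-a)/h) * RR a b h \<theta> (-k)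
        in if x < a then Tt * ei (k*x/h)
           else if x < b then At * ei (k*x/h) + Bt * ei (- k*x/h)
           else ei (k*x/h) + Rt * ei (- k*x/h)))"

definition hFT :: "real \<Rightarrow> (real \<Rightarrow> complex) \<Rightarrow> real \<Rightarrow> complex" where
  "hFT h u k = (LINT y|lborel. u y * ei (- k*y/h)) / of_real (sqrt (2*pi*h))"

definition Wop :: "real \<Rightarrow> real \<Rightarrow> real \<Rightarrow> complex \<Rightarrow> (real \<Rightarrow> complex) \<Rightarrow> real \<Rightarrow> complex" where
  "Wop a b h \<theta> u x = (LINT k|lborel. psi a b h \<theta> k x * hFT h u k) / of_real (sqrt (2*pi*h))"

end

theory Submission
  imports Defs "HOL-Probability.Probability"
begin

lemma ei_mult: "ei s * ei t = ei (s + t)"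
  by (simp add: ei_def algebra_simps flip: exp_add)
lemma norm_ei [simp]: "norm (ei t) = 1"
  by (simp add: ei_def)
lemma cnj_ei: "cnj (ei t) = ei (- t)"
  by (simp add: ei_def exp_cnj)
lemma ei_0 [simp]: "ei 0 = 1" by (simp add: ei_def)
lemma ei_measurable [measurable]: "ei \<in> borel_measurable borel"
  unfolding ei_def by measurable
lemma continuous_ei [continuous_intros]: "continuous_on S ei"
  unfolding ei_def by (intro continuous_intros)

lemma gauss_ft:
  fixes c w :: real assumes c: "c > 0"
  shows "integrable lborel (\<lambda>x. complex_of_real (exp (- c * x\<^sup>2)) * ei (w * x))"
    and "(\<integral>x. complex_of_real (exp (- c * x\<^sup>2)) * ei (w * x) \<partial>lborel)
          = complex_of_real (sqrt (pi / c) * exp (- w\<^sup>2 / (4 * c)))"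
proof -
  define s where "s = 1 / sqrt (2 * c)"
  have s: "s > 0" using c by (simp add: s_def)
  have s2: "s\<^sup>2 = 1 / (2*c)" using c by (simp add: s_def power_divide)
  let ?f = "\<lambda>x. complex_of_real (exp (- c * x\<^sup>2)) * ei (w * x)"
  have ch: "char std_normal_distribution (w * s) = complex_of_real (exp (- ((w * s)\<^sup>2) / 2))"
    by (simp add: char_std_normal_distribution)
  have "char std_normal_distribution (w * s) =
      (\<integral>x. complex_of_real (std_normal_density x) * iexp (w * s * x) \<partial>lborel)"
    unfolding char_def
    by (subst integral_density) (auto simp: normal_density_nonneg scaleR_conv_of_real)
  also have "\<dots> = (\<integral>x. complex_of_real (1 / sqrt (2 * pi)) * ?f (0 + s * x) \<partial>lborel)"
    by (intro Bochner_Integration.integral_cong refl)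
       (use c in \<open>simp add: std_normal_density_def ei_def power_mult_distrib s2 field_simps\<close>)
  finally have e1: "char std_normal_distribution (w * s) =
      complex_of_real (1 / sqrt (2 * pi)) * (\<integral>x. ?f (0 + s * x) \<partial>lborel)" by simp
  have intg_norm: "integrable lborel (\<lambda>x. std_normal_density x)"
    using integrable_normal_density[of 1 0] by simp
  have "integrable lborel (\<lambda>x. ?f (0 + s * x))"
  proof (rule Bochner_Integration.integrable_bound[where f="\<lambda>x. sqrt (2*pi) * std_normal_density x"])
    show "integrable lborel (\<lambda>x. sqrt (2*pi) * std_normal_density x)" using intg_norm by simp
    show "(\<lambda>x. ?f (0 + s * x)) \<in> borel_measurable lborel" by measurable
    show "AE x in lborel. norm (?f (0 + s * x)) \<le> norm (sqrt (2*pi) * std_normal_density x)"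
    proof (intro AE_I2)
      fix x :: real
      have "c * (s * x)\<^sup>2 = x\<^sup>2 / 2" using s2 c by (simp add: power_mult_distrib field_simps)
      then show "norm (?f (0 + s * x)) \<le> norm (sqrt (2*pi) * std_normal_density x)"
        by (simp add: std_normal_density_def norm_mult)
    qed
  qed
  then show i: "integrable lborel ?f"
    using lborel_integrable_real_affine_iff[of s ?f 0] s by simp
  have "(\<integral>x. ?f x \<partial>lborel) = \<bar>s\<bar> *\<^sub>R (\<integral>x. ?f (0 + s * x) \<partial>lborel)"
    using lborel_integral_real_affine[of s ?f 0] s by simp
  also have "(\<integral>x. ?f (0 + s * x) \<partial>lborel) = complex_of_real (sqrt (2*pi)) * char std_normal_distribution (w * s)"
    using e1 by (simp add: real_sqrt_mult)
  finally show "(\<integral>x. ?f x \<partial>lborel) = complex_of_real (sqrt (pi / c) * exp (- w\<^sup>2 / (4 * c)))"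
    using s c unfolding ch
    by (simp add: scaleR_conv_of_real s_def power_mult_distrib real_sqrt_divide real_sqrt_mult field_simps)
qed

lemma borel_measurable_cnj [measurable (raw)]:
  fixes f :: "'a \<Rightarrow> complex"
  assumes "f \<in> borel_measurable M"
  shows "(\<lambda>x. cnj (f x)) \<in> borel_measurable M"
proof -
  have "cnj \<in> borel_measurable borel"
    by (intro borel_measurable_continuous_onI continuous_intros)
  then show ?thesis using assms by (rule measurable_compose[rotated])
qed

lemma gauss_real:
  fixes c :: real assumes c: "c > 0"
  shows "integrable lborel (\<lambda>x. exp (- c * x\<^sup>2))"
    and "(\<integral>x. exp (- c * x\<^sup>2) \<partial>lborel) = sqrt (pi / c)"
proof -
  have i: "complex_integrable lborel (\<lambda>x. complex_of_real (exp (- c * x\<^sup>2)))"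
    using gauss_ft(1)[OF c, of 0] by simp
  then show "integrable lborel (\<lambda>x. exp (- c * x\<^sup>2))"
    by (simp add: complex_of_real_integrable_eq)
  have "complex_of_real (\<integral>x. exp (- c * x\<^sup>2) \<partial>lborel) = complex_of_real (sqrt (pi / c))"
    using gauss_ft(2)[OF c, of 0] by simp
  then show "(\<integral>x. exp (- c * x\<^sup>2) \<partial>lborel) = sqrt (pi / c)"
    using of_real_eq_iff by blast
qed

lemma nn_gauss_shift:
  fixes c k :: real assumes c: "c > 0"
  shows "(\<integral>\<^sup>+x. ennreal (exp (- c * (k - x)\<^sup>2)) \<partial>lborel) = ennreal (sqrt (pi / c))"
proof -
  have "(\<integral>\<^sup>+x. ennreal (exp (- c * x\<^sup>2)) \<partial>lborel)
      = ennreal \<bar>-1::real\<bar> * (\<integral>\<^sup>+x. ennreal (exp (- c * (k + (-1) * x)\<^sup>2)) \<partial>lborel)"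
    by (rule nn_integral_real_affine) auto
  moreover have "(\<integral>\<^sup>+x. ennreal (exp (- c * x\<^sup>2)) \<partial>lborel) = ennreal (sqrt (pi / c))"
    using gauss_real[OF c] by (subst nn_integral_eq_integral) auto
  ultimately show ?thesis by simp
qed

lemma fubini_bd:
  fixes f :: "real \<Rightarrow> real \<Rightarrow> complex"
  assumes f[measurable]: "case_prod f \<in> borel_measurable (lborel \<Otimes>\<^sub>M lborel)"
  and p: "integrable lborel p" and q: "integrable lborel q"
  and p0: "\<And>x. 0 \<le> p x" and q0: "\<And>y. 0 \<le> q y"
  and bd: "\<And>x y. norm (f x y) \<le> p x * q y"
  shows "integrable (lborel \<Otimes>\<^sub>M lborel) (case_prod f)"
    and "(\<integral>y. (\<integral>x. f x y \<partial>lborel) \<partial>lborel) = (\<integral>x. (\<integral>y. f x y \<partial>lborel) \<partial>lborel)"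
proof -
  have pm[measurable]: "p \<in> borel_measurable borel" and qm[measurable]: "q \<in> borel_measurable borel"
    using p q by auto
  have "(\<integral>\<^sup>+z. norm (case_prod f z) \<partial>(lborel \<Otimes>\<^sub>M lborel))
      \<le> (\<integral>\<^sup>+z. ennreal (p (fst z) * q (snd z)) \<partial>(lborel \<Otimes>\<^sub>M lborel))"
    by (intro nn_integral_mono) (auto simp: bd intro!: ennreal_leI)
  also have "\<dots> = (\<integral>\<^sup>+x. (\<integral>\<^sup>+y. ennreal (p x * q y) \<partial>lborel) \<partial>lborel)"
    by (subst lborel.nn_integral_fst[symmetric]) auto
  also have "\<dots> = (\<integral>\<^sup>+x. ennreal (p x) * (\<integral>\<^sup>+y. ennreal (q y) \<partial>lborel) \<partial>lborel)"
    by (intro nn_integral_cong) (simp add: ennreal_mult p0 q0 nn_integral_cmult)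
  also have "\<dots> = (\<integral>\<^sup>+x. ennreal (p x) \<partial>lborel) * (\<integral>\<^sup>+y. ennreal (q y) \<partial>lborel)"
    by (simp add: nn_integral_multc)
  also have "\<dots> < \<infinity>"
    using p q p0 q0 by (simp add: nn_integral_eq_integral ennreal_mult_less_top)
  finally show i: "integrable (lborel \<Otimes>\<^sub>M lborel) (case_prod f)"
    by (intro integrableI_bounded) auto
  show "(\<integral>y. (\<integral>x. f x y \<partial>lborel) \<partial>lborel) = (\<integral>x. (\<integral>y. f x y \<partial>lborel) \<partial>lborel)"
    by (rule lborel_pair.Fubini_integral[OF i])
qed

lemma bessel_eps:
  fixes g :: "real \<Rightarrow> complex" and t \<epsilon> :: real
  assumes t: "t \<noteq> 0" and e: "\<epsilon> > 0"
  and gm[measurable]: "g \<in> borel_measurable borel" and gi: "integrable lborel g"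
  shows "(\<integral>\<^sup>+x. ennreal ((cmod (\<integral>k. g k * ei (t*k*x) \<partial>lborel))\<^sup>2 * exp (- \<epsilon> * x\<^sup>2)) \<partial>lborel)
     \<le> ennreal (2*pi/\<bar>t\<bar>) * (\<integral>\<^sup>+k. ennreal ((cmod (g k))\<^sup>2) \<partial>lborel)"
proof -
  define \<Phi> where "\<Phi> x = (\<integral>k. g k * ei (t*k*x) \<partial>lborel)" for x
  define G where "G x = exp (- \<epsilon> * x\<^sup>2)" for x
  define c where "c = t\<^sup>2 / (4*\<epsilon>)"
  have c: "c > 0" using t e by (simp add: c_def)
  define K where "K d = sqrt (pi/\<epsilon>) * exp (- c * d\<^sup>2)" for d
  define N where "N = (\<integral>k. norm (g k) \<partial>lborel)"
  have K0: "K d \<ge> 0" for d using e by (simp add: K_def)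
  have Kle: "K d \<le> sqrt (pi/\<epsilon>)" for d
  proof -
    have "exp (- c * d\<^sup>2) \<le> 1" using c by simp
    then show ?thesis unfolding K_def using e by (intro mult_left_le) auto
  qed
  have G0: "G x \<ge> 0" for x by (simp add: G_def)
  have Gle: "G x \<le> 1" for x using e by (simp add: G_def)
  have Gi: "integrable lborel G" unfolding G_def using gauss_real(1)[OF e] .
  have [measurable]: "G \<in> borel_measurable borel" "K \<in> borel_measurable borel"
    unfolding G_def K_def by measurable
  have gni: "integrable lborel (\<lambda>k. norm (g k))" using gi by simp
  have \<Phi>m[measurable]: "\<Phi> \<in> borel_measurable borel"
  proof -
    have "(\<lambda>x. \<integral>k. g k * ei (t*k*x) \<partial>lborel) \<in> borel_measurable lborel"
      by measurable
    then show ?thesis unfolding \<Phi>_def by simp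
  qed
  have \<Phi>b: "norm (\<Phi> x) \<le> N" for x
  proof -
    have "norm (\<Phi> x) \<le> (\<integral>k. norm (g k * ei (t*k*x)) \<partial>lborel)"
      unfolding \<Phi>_def by (rule integral_norm_bound)
    then show ?thesis by (simp add: N_def norm_mult)
  qed
  have N0: "N \<ge> 0" unfolding N_def by simp
  have FT: "(\<integral>x. complex_of_real (G x) * ei ((t*(k - k'))*x) \<partial>lborel) = complex_of_real (K (k - k'))" for k k'
  proof -
    have "(t*(k-k'))\<^sup>2 / (4*\<epsilon>) = t\<^sup>2 / (4*\<epsilon>) * (k - k')\<^sup>2"
      by (simp add: power_mult_distrib)
    then show ?thesis
      using gauss_ft(2)[OF e, of "t*(k-k')"] unfolding G_def K_def c_def
      by (simp add: mult.commute)
  qed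
  define \<Psi> where "\<Psi> k = (\<integral>k'. cnj (g k') * complex_of_real (K (k - k')) \<partial>lborel)" for k
  have step2: "(\<integral>x. complex_of_real (G x) * ei (t*k*x) * cnj (\<Phi> x) \<partial>lborel) = \<Psi> k" for k
  proof -
    have "(\<integral>x. complex_of_real (G x) * ei (t*k*x) * cnj (\<Phi> x) \<partial>lborel)
        = (\<integral>x. (\<integral>k'. cnj (g k') * (complex_of_real (G x) * ei ((t*(k - k'))*x)) \<partial>lborel) \<partial>lborel)"
    proof (intro Bochner_Integration.integral_cong refl)
      fix x
      have "cnj (\<Phi> x) = (\<integral>k'. cnj (g k' * ei (t*k'*x)) \<partial>lborel)"
        unfolding \<Phi>_def by (simp only: Bochner_Integration.integral_cnj)
      also have "\<dots> = (\<integral>k'. cnj (g k') * ei (- (t*k'*x)) \<partial>lborel)"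
        by (simp add: cnj_ei)
      finally have "cnj (\<Phi> x) = (\<integral>k'. cnj (g k') * ei (- (t*k'*x)) \<partial>lborel)" .
      then have "complex_of_real (G x) * ei (t*k*x) * cnj (\<Phi> x)
          = (\<integral>k'. complex_of_real (G x) * ei (t*k*x) * (cnj (g k') * ei (- (t*k'*x))) \<partial>lborel)"
        by simp
      also have "\<dots> = (\<integral>k'. cnj (g k') * (complex_of_real (G x) * ei ((t*(k - k'))*x)) \<partial>lborel)"
        by (intro Bochner_Integration.integral_cong refl)
           (simp add: ei_mult algebra_simps)
      finally show "complex_of_real (G x) * ei (t*k*x) * cnj (\<Phi> x)
          = (\<integral>k'. cnj (g k') * (complex_of_real (G x) * ei ((t*(k - k'))*x)) \<partial>lborel)" .
    qed
    also have "\<dots> = (\<integral>k'. (\<integral>x. cnj (g k') * (complex_of_real (G x) * ei ((t*(k - k'))*x)) \<partial>lborel) \<partial>lborel)"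
      by (rule fubini_bd(2)[where q=G and p="\<lambda>k'. norm (g k')"])
         (measurable, auto simp: Gi gni G0 norm_mult mult.commute)
    also have "\<dots> = \<Psi> k"
      unfolding \<Psi>_def by (simp add: FT)
    finally show ?thesis .
  qed
  have step3: "(\<integral>x. complex_of_real (G x * (cmod (\<Phi> x))\<^sup>2) \<partial>lborel) = (\<integral>k. g k * \<Psi> k \<partial>lborel)"
  proof -
    have "(\<integral>x. complex_of_real (G x * (cmod (\<Phi> x))\<^sup>2) \<partial>lborel)
        = (\<integral>x. (\<integral>k. g k * (complex_of_real (G x) * ei (t*k*x) * cnj (\<Phi> x)) \<partial>lborel) \<partial>lborel)"
    proof (intro Bochner_Integration.integral_cong refl)
      fix x
      have "complex_of_real (G x * (cmod (\<Phi> x))\<^sup>2) = complex_of_real (G x) * \<Phi> x * cnj (\<Phi> x)"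
        by (simp only: of_real_mult complex_norm_square mult.assoc)
      also have "\<dots> = (\<integral>k. g k * ei (t*k*x) \<partial>lborel) * (complex_of_real (G x) * cnj (\<Phi> x))"
        unfolding \<Phi>_def by (simp add: ac_simps)
      also have "\<dots> = (\<integral>k. g k * ei (t*k*x) * (complex_of_real (G x) * cnj (\<Phi> x)) \<partial>lborel)"
        by (rule integral_mult_left_zero[symmetric])
      also have "\<dots> = (\<integral>k. g k * (complex_of_real (G x) * ei (t*k*x) * cnj (\<Phi> x)) \<partial>lborel)"
        by (intro Bochner_Integration.integral_cong refl) (simp add: ac_simps)
      finally show "complex_of_real (G x * (cmod (\<Phi> x))\<^sup>2)
          = (\<integral>k. g k * (complex_of_real (G x) * ei (t*k*x) * cnj (\<Phi> x)) \<partial>lborel)" .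
    qed
    also have "\<dots> = (\<integral>k. (\<integral>x. g k * (complex_of_real (G x) * ei (t*k*x) * cnj (\<Phi> x)) \<partial>lborel) \<partial>lborel)"
    proof (rule fubini_bd(2)[where q="\<lambda>x. G x * N" and p="\<lambda>k. norm (g k)"])
      show "integrable lborel (\<lambda>x. G x * N)" using Gi by simp
      show "norm (g k * (complex_of_real (G x) * ei (t * k * x) * cnj (\<Phi> x))) \<le> norm (g k) * (G x * N)" for x k
      proof -
        have "norm (g k) * G x * norm (\<Phi> x) \<le> norm (g k) * G x * N"
          by (rule mult_left_mono[OF \<Phi>b]) (simp add: G0)
        then show ?thesis by (simp add: norm_mult mult_ac G0)
      qed
    qed (measurable, auto simp: gni G0 N0)
    also have "\<dots> = (\<integral>k. g k * \<Psi> k \<partial>lborel)"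
      by (simp add: step2)
    finally show ?thesis .
  qed
  have Kint: "integrable lborel (\<lambda>k'. cnj (g k') * complex_of_real (K (k - k')))" for k
  proof (rule Bochner_Integration.integrable_bound[where f="\<lambda>k'. norm (g k') * sqrt (pi/\<epsilon>)"])
    show "integrable lborel (\<lambda>k'. norm (g k') * sqrt (pi/\<epsilon>))" using gni by simp
    show "(\<lambda>k'. cnj (g k') * complex_of_real (K (k - k'))) \<in> borel_measurable lborel" by measurable
    show "AE x in lborel. norm (cnj (g x) * complex_of_real (K (k - x))) \<le> norm (norm (g x) * sqrt (pi/\<epsilon>))"
    proof (intro AE_I2)
      fix x
      have "norm (g x) * K (k - x) \<le> norm (g x) * sqrt (pi/\<epsilon>)" by (intro mult_left_mono Kle) simp
      then show "norm (cnj (g x) * complex_of_real (K (k - x))) \<le> norm (norm (g x) * sqrt (pi/\<epsilon>))"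
        by (simp add: norm_mult K0)
    qed
  qed
  have Gi2: "integrable lborel (\<lambda>x. G x * (cmod (\<Phi> x))\<^sup>2)"
  proof (rule Bochner_Integration.integrable_bound[where f="\<lambda>x. G x * N\<^sup>2"])
    show "integrable lborel (\<lambda>x. G x * N\<^sup>2)" using Gi by simp
    show "(\<lambda>x. G x * (cmod (\<Phi> x))\<^sup>2) \<in> borel_measurable lborel" by measurable
    show "AE x in lborel. norm (G x * (cmod (\<Phi> x))\<^sup>2) \<le> norm (G x * N\<^sup>2)"
    proof (intro AE_I2)
      fix x
      have "(cmod (\<Phi> x))\<^sup>2 \<le> N\<^sup>2" by (intro power_mono \<Phi>b) simp
      then have "G x * (cmod (\<Phi> x))\<^sup>2 \<le> G x * N\<^sup>2" by (intro mult_left_mono G0)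
      then show "norm (G x * (cmod (\<Phi> x))\<^sup>2) \<le> norm (G x * N\<^sup>2)" by (simp add: G0)
    qed
  qed
  have fubeq: "(\<integral>\<^sup>+k. (\<integral>\<^sup>+k'. ennreal ((norm (g k'))\<^sup>2 * K (k - k') / 2) \<partial>lborel) \<partial>lborel)
      = (\<integral>\<^sup>+k'. (\<integral>\<^sup>+k. ennreal ((norm (g k'))\<^sup>2 * K (k - k') / 2) \<partial>lborel) \<partial>lborel)"
    by (rule lborel_pair.Fubini') measurable
  have "(\<integral>\<^sup>+x. ennreal ((cmod (\<Phi> x))\<^sup>2 * G x) \<partial>lborel) = ennreal (\<integral>x. G x * (cmod (\<Phi> x))\<^sup>2 \<partial>lborel)"
    using Gi2 by (subst nn_integral_eq_integral) (auto simp: G0 mult.commute)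
  also have "(\<integral>x. G x * (cmod (\<Phi> x))\<^sup>2 \<partial>lborel) = norm (\<integral>k. g k * \<Psi> k \<partial>lborel)"
  proof -
    have "complex_of_real (\<integral>x. G x * (cmod (\<Phi> x))\<^sup>2 \<partial>lborel) = (\<integral>k. g k * \<Psi> k \<partial>lborel)"
      using step3 by (simp only: integral_complex_of_real)
    then have "norm (complex_of_real (\<integral>x. G x * (cmod (\<Phi> x))\<^sup>2 \<partial>lborel)) = norm (\<integral>k. g k * \<Psi> k \<partial>lborel)"
      by simp
    moreover have "(\<integral>x. G x * (cmod (\<Phi> x))\<^sup>2 \<partial>lborel) \<ge> 0"
      by (simp add: G0)
    ultimately show ?thesis by simp
  qed
  also have "ennreal (norm (\<integral>k. g k * \<Psi> k \<partial>lborel)) \<le> (\<integral>\<^sup>+k. norm (g k * \<Psi> k) \<partial>lborel)"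
  proof (rule integral_norm_bound_ennreal)
    have \<Psi>b: "norm (\<Psi> k) \<le> N * sqrt (pi/\<epsilon>)" for k
    proof -
      have "norm (\<Psi> k) \<le> (\<integral>k'. norm (cnj (g k') * complex_of_real (K (k - k'))) \<partial>lborel)"
        unfolding \<Psi>_def by (rule integral_norm_bound)
      also have "\<dots> \<le> (\<integral>k'. norm (g k') * sqrt (pi/\<epsilon>) \<partial>lborel)"
      proof (intro integral_mono)
        show "integrable lborel (\<lambda>k'. norm (cnj (g k') * complex_of_real (K (k - k'))))"
          using Kint[of k] by simp
        show "integrable lborel (\<lambda>k'. norm (g k') * sqrt (pi/\<epsilon>))" using gni by simp
        fix x
        have "norm (g x) * K (k - x) \<le> norm (g x) * sqrt (pi/\<epsilon>)" by (intro mult_left_mono Kle) simp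
        then show "norm (cnj (g x) * complex_of_real (K (k - x))) \<le> norm (g x) * sqrt (pi/\<epsilon>)"
          by (simp add: norm_mult K0)
      qed
      finally show ?thesis by (simp add: N_def)
    qed
    have [measurable]: "\<Psi> \<in> borel_measurable borel"
    proof -
      have "(\<lambda>k. \<integral>k'. cnj (g k') * complex_of_real (K (k - k')) \<partial>lborel) \<in> borel_measurable lborel"
        by measurable
      then show ?thesis unfolding \<Psi>_def by simp
    qed
    show "integrable lborel (\<lambda>k. g k * \<Psi> k)"
    proof (rule Bochner_Integration.integrable_bound[where f="\<lambda>k. norm (g k) * (N * sqrt (pi/\<epsilon>))"])
      show "integrable lborel (\<lambda>k. norm (g k) * (N * sqrt (pi/\<epsilon>)))" using gni by simp
      show "(\<lambda>k. g k * \<Psi> k) \<in> borel_measurable lborel" by measurable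
      show "AE x in lborel. norm (g x * \<Psi> x) \<le> norm (norm (g x) * (N * sqrt (pi/\<epsilon>)))"
      proof (intro AE_I2)
        fix x
        have "norm (g x) * norm (\<Psi> x) \<le> norm (g x) * (N * sqrt (pi/\<epsilon>))"
          by (intro mult_left_mono \<Psi>b) simp
        moreover have "N * sqrt (pi/\<epsilon>) \<ge> 0" using N0 e by simp
        ultimately show "norm (g x * \<Psi> x) \<le> norm (norm (g x) * (N * sqrt (pi/\<epsilon>)))"
          by (simp add: norm_mult)
      qed
    qed
  qed
  also have "(\<integral>\<^sup>+k. norm (g k * \<Psi> k) \<partial>lborel)
      \<le> (\<integral>\<^sup>+k. (\<integral>\<^sup>+k'. ennreal (norm (g k) * norm (g k') * K (k - k')) \<partial>lborel) \<partial>lborel)"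
  proof (intro nn_integral_mono)
    fix k
    have "ennreal (norm (\<Psi> k)) \<le> (\<integral>\<^sup>+k'. norm (cnj (g k') * complex_of_real (K (k - k'))) \<partial>lborel)"
      unfolding \<Psi>_def
    proof (rule integral_norm_bound_ennreal)
      show "integrable lborel (\<lambda>k'. cnj (g k') * complex_of_real (K (k - k')))"
        by (rule Kint)
    qed
    then have "ennreal (norm (g k)) * ennreal (norm (\<Psi> k))
        \<le> ennreal (norm (g k)) * (\<integral>\<^sup>+k'. norm (cnj (g k') * complex_of_real (K (k - k'))) \<partial>lborel)"
      by (rule mult_left_mono) simp
    also have "\<dots> = (\<integral>\<^sup>+k'. ennreal (norm (g k) * norm (g k') * K (k - k')) \<partial>lborel)"
      by (subst nn_integral_cmult[symmetric]) (auto intro!: nn_integral_cong simp: norm_mult K0 ennreal_mult mult.assoc)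
    finally show "ennreal (norm (g k * \<Psi> k)) \<le> (\<integral>\<^sup>+k'. ennreal (norm (g k) * norm (g k') * K (k - k')) \<partial>lborel)"
      by (simp add: norm_mult ennreal_mult)
  qed
  also have "\<dots> \<le> (\<integral>\<^sup>+k. (\<integral>\<^sup>+k'. ennreal ((norm (g k))\<^sup>2 * K (k - k') / 2) + ennreal ((norm (g k'))\<^sup>2 * K (k - k') / 2) \<partial>lborel) \<partial>lborel)"
  proof (intro nn_integral_mono)
    fix k k'
    have "norm (g k) * norm (g k') \<le> ((norm (g k))\<^sup>2 + (norm (g k'))\<^sup>2) / 2"
      using sum_squares_bound[of "norm (g k)" "norm (g k')"] by (simp add: field_simps)
    then have "norm (g k) * norm (g k') * K (k - k') \<le> ((norm (g k))\<^sup>2 + (norm (g k'))\<^sup>2) / 2 * K (k - k')"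
      by (rule mult_right_mono) (rule K0)
    then show "ennreal (norm (g k) * norm (g k') * K (k - k'))
        \<le> ennreal ((norm (g k))\<^sup>2 * K (k - k') / 2) + ennreal ((norm (g k'))\<^sup>2 * K (k - k') / 2)"
      by (subst ennreal_plus[symmetric]) (auto simp: K0 field_simps intro!: ennreal_leI)
  qed
  also have "\<dots> = (\<integral>\<^sup>+k. (\<integral>\<^sup>+k'. ennreal ((norm (g k))\<^sup>2 * K (k - k') / 2) \<partial>lborel) \<partial>lborel)
              + (\<integral>\<^sup>+k. (\<integral>\<^sup>+k'. ennreal ((norm (g k'))\<^sup>2 * K (k - k') / 2) \<partial>lborel) \<partial>lborel)"
    by (subst nn_integral_add[symmetric]) (auto intro!: nn_integral_cong nn_integral_add)
  also have "\<dots> = (\<integral>\<^sup>+k. (\<integral>\<^sup>+k'. ennreal ((norm (g k))\<^sup>2 * K (k - k') / 2) \<partial>lborel) \<partial>lborel)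
              + (\<integral>\<^sup>+k'. (\<integral>\<^sup>+k. ennreal ((norm (g k'))\<^sup>2 * K (k - k') / 2) \<partial>lborel) \<partial>lborel)"
    by (simp only: fubeq)
  also have "\<dots> = ennreal (pi/\<bar>t\<bar>) * (\<integral>\<^sup>+k. ennreal ((cmod (g k))\<^sup>2) \<partial>lborel)
                  + ennreal (pi/\<bar>t\<bar>) * (\<integral>\<^sup>+k. ennreal ((cmod (g k))\<^sup>2) \<partial>lborel)"
  proof -
    have KI: "(\<integral>\<^sup>+k'. ennreal (K (k - k')) \<partial>lborel) = ennreal (2*pi/\<bar>t\<bar>)" for k
    proof -
      have "(\<integral>\<^sup>+k'. ennreal (K (k - k')) \<partial>lborel)
          = (\<integral>\<^sup>+k'. ennreal (sqrt (pi/\<epsilon>)) * ennreal (exp (- c * (k - k')\<^sup>2)) \<partial>lborel)"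
        using e by (intro nn_integral_cong) (simp add: K_def ennreal_mult)
      also have "\<dots> = ennreal (sqrt (pi/\<epsilon>)) * ennreal (sqrt (pi/c))"
        using nn_gauss_shift[OF c, of k] by (simp add: nn_integral_cmult)
      finally have I1: "(\<integral>\<^sup>+k'. ennreal (K (k - k')) \<partial>lborel) = ennreal (sqrt (pi/\<epsilon>)) * ennreal (sqrt (pi/c))" .
      have sq: "sqrt (pi/\<epsilon>) * sqrt (pi/c) = 2*pi/\<bar>t\<bar>"
      proof -
        have "sqrt (pi/\<epsilon>) * sqrt (pi/c) = sqrt ((pi/\<epsilon>) * (pi/c))" by (simp only: real_sqrt_mult)
        also have "(pi/\<epsilon>) * (pi/c) = (2*pi/\<bar>t\<bar>)\<^sup>2"
          using t e by (simp add: c_def field_simps power2_eq_square)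
        finally show ?thesis by simp
      qed
      show ?thesis using I1 sq e c by (simp add: ennreal_mult[symmetric])
    qed
    have KI': "(\<integral>\<^sup>+k. ennreal (K (k - k')) \<partial>lborel) = ennreal (2*pi/\<bar>t\<bar>)" for k'
    proof -
      have "(\<integral>\<^sup>+k. ennreal (K (k - k')) \<partial>lborel) = (\<integral>\<^sup>+k. ennreal (K (k' - k)) \<partial>lborel)"
        by (intro nn_integral_cong) (simp add: K_def power2_commute)
      then show ?thesis using KI by simp
    qed
    have X: "(\<integral>\<^sup>+k'. ennreal ((norm (g k))\<^sup>2 * K (k - k') / 2) \<partial>lborel)
        = ennreal (pi/\<bar>t\<bar>) * ennreal ((cmod (g k))\<^sup>2)" for k
    proof -
      have "(\<integral>\<^sup>+k'. ennreal ((norm (g k))\<^sup>2 * K (k - k') / 2) \<partial>lborel)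
          = (\<integral>\<^sup>+k'. ennreal ((norm (g k))\<^sup>2 / 2) * ennreal (K (k - k')) \<partial>lborel)"
        by (intro nn_integral_cong) (simp add: K0 ennreal_mult[symmetric])
      also have "\<dots> = ennreal ((norm (g k))\<^sup>2 / 2) * ennreal (2*pi/\<bar>t\<bar>)"
        by (simp add: nn_integral_cmult KI)
      finally show ?thesis by (simp add: ennreal_mult[symmetric] mult.commute)
    qed
    have Y: "(\<integral>\<^sup>+k. ennreal ((norm (g k'))\<^sup>2 * K (k - k') / 2) \<partial>lborel)
        = ennreal (pi/\<bar>t\<bar>) * ennreal ((cmod (g k'))\<^sup>2)" for k'
    proof -
      have "(\<integral>\<^sup>+k. ennreal ((norm (g k'))\<^sup>2 * K (k - k') / 2) \<partial>lborel)
          = (\<integral>\<^sup>+k. ennreal ((norm (g k'))\<^sup>2 / 2) * ennreal (K (k - k')) \<partial>lborel)"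
        by (intro nn_integral_cong) (simp add: K0 ennreal_mult[symmetric])
      also have "\<dots> = ennreal ((norm (g k'))\<^sup>2 / 2) * ennreal (2*pi/\<bar>t\<bar>)"
        by (simp add: nn_integral_cmult KI')
      finally show ?thesis by (simp add: ennreal_mult[symmetric] mult.commute)
    qed
    have m: "(\<lambda>k. ennreal ((cmod (g k))\<^sup>2)) \<in> borel_measurable lborel" by measurable
    show ?thesis by (simp only: X Y nn_integral_cmult[OF m])
  qed
  also have "\<dots> = ennreal (2*pi/\<bar>t\<bar>) * (\<integral>\<^sup>+k. ennreal ((cmod (g k))\<^sup>2) \<partial>lborel)"
  proof -
    have "ennreal (2*pi/\<bar>t\<bar>) = ennreal (pi/\<bar>t\<bar>) + ennreal (pi/\<bar>t\<bar>)"
      by (subst ennreal_plus[symmetric]) auto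
    then show ?thesis by (simp add: distrib_right)
  qed
  finally show ?thesis unfolding \<Phi>_def G_def .
qed

lemma bessel:
  fixes g :: "real \<Rightarrow> complex" and t :: real
  assumes t: "t \<noteq> 0"
  and gm[measurable]: "g \<in> borel_measurable borel" and gi: "integrable lborel g"
  shows "(\<integral>\<^sup>+x. ennreal ((cmod (\<integral>k. g k * ei (t*k*x) \<partial>lborel))\<^sup>2) \<partial>lborel)
     \<le> ennreal (2*pi/\<bar>t\<bar>) * (\<integral>\<^sup>+k. ennreal ((cmod (g k))\<^sup>2) \<partial>lborel)"
proof -
  define \<Phi> where "\<Phi> x = (\<integral>k. g k * ei (t*k*x) \<partial>lborel)" for x
  define B where "B = ennreal (2*pi/\<bar>t\<bar>) * (\<integral>\<^sup>+k. ennreal ((cmod (g k))\<^sup>2) \<partial>lborel)"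
  define f where "f n x = ennreal ((cmod (\<Phi> x))\<^sup>2 * exp (- (1 / real (Suc n)) * x\<^sup>2))" for n x
  have \<Phi>m[measurable]: "\<Phi> \<in> borel_measurable borel"
  proof -
    have "(\<lambda>x. \<integral>k. g k * ei (t*k*x) \<partial>lborel) \<in> borel_measurable lborel"
      by measurable
    then show ?thesis unfolding \<Phi>_def by simp
  qed
  have fm: "f n \<in> borel_measurable lborel" for n unfolding f_def by measurable
  have lim: "(\<lambda>n. f n x) \<longlonglongrightarrow> ennreal ((cmod (\<Phi> x))\<^sup>2)" for x
  proof -
    have "(\<lambda>n. 1 / real (Suc n)) \<longlonglongrightarrow> 0"
      using LIMSEQ_inverse_real_of_nat by (simp add: inverse_eq_divide)
    then have "(\<lambda>n. (cmod (\<Phi> x))\<^sup>2 * exp (- (1 / real (Suc n)) * x\<^sup>2)) \<longlonglongrightarrow> (cmod (\<Phi> x))\<^sup>2 * exp (- 0 * x\<^sup>2)"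
      by (intro tendsto_intros)
    then show ?thesis unfolding f_def by (intro tendsto_ennrealI) simp
  qed
  have "(\<integral>\<^sup>+x. ennreal ((cmod (\<Phi> x))\<^sup>2) \<partial>lborel) = (\<integral>\<^sup>+x. liminf (\<lambda>n. f n x) \<partial>lborel)"
    by (intro nn_integral_cong) (simp add: lim_imp_Liminf[OF _ lim])
  also have "\<dots> \<le> liminf (\<lambda>n. integral\<^sup>N lborel (f n))"
    by (rule nn_integral_liminf) (rule fm)
  also have "\<dots> \<le> limsup (\<lambda>n. integral\<^sup>N lborel (f n))"
    by (rule Liminf_le_Limsup) simp
  also have "\<dots> \<le> B"
  proof (rule Limsup_bounded, intro always_eventually allI)
    fix n
    show "integral\<^sup>N lborel (f n) \<le> B"
      unfolding f_def B_def \<Phi>_def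
      by (rule bessel_eps[OF t _ gm gi]) simp
  qed
  finally show ?thesis unfolding \<Phi>_def B_def .
qed

lemma exp_sub1_bound:
  fixes z :: complex assumes "norm z \<le> 1"
  shows "norm (exp z - 1) \<le> 3 * norm z"
proof -
  have "norm (exp z - 1) \<le> exp (norm z) * norm z"
    using Taylor_exp_field[of z 0] by simp
  also have "exp (norm z) \<le> 3"
  proof -
    have "exp (norm z) \<le> exp 1" using assms by simp
    then show ?thesis using exp_le by linarith
  qed
  then have "exp (norm z) * norm z \<le> 3 * norm z"
    by (intro mult_right_mono) auto
  finally show ?thesis .
qed

lemma coef_bounds:
  fixes \<theta> :: complex assumes th: "norm \<theta> \<le> 1/16"
  shows "norm (cp \<theta> - 2) \<le> 6 * norm \<theta>" "norm (cm \<theta>) \<le> 6 * norm \<theta>"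
    "norm (cp \<theta>) \<le> 3" "norm (cp \<theta>) \<ge> 3/2" "norm (cm \<theta>) \<le> 1/2"
proof -
  have e1: "norm (exp (\<theta>/2) - 1) \<le> 3 * norm (\<theta>/2)"
    using th by (intro exp_sub1_bound) (simp add: norm_divide)
  have e2: "norm (exp (3/2*\<theta>) - 1) \<le> 3 * norm (3/2*\<theta>)"
    using th by (intro exp_sub1_bound) (simp add: norm_mult)
  have n1: "norm (\<theta>/2) = norm \<theta> / 2" by (simp add: norm_divide)
  have n2: "norm (3/2*\<theta>) = 3/2 * norm \<theta>" by (simp add: norm_mult)
  have "cp \<theta> - 2 = (exp (\<theta>/2) - 1) + (exp (3/2*\<theta>) - 1)" by (simp add: cp_def)
  then have "norm (cp \<theta> - 2) \<le> norm (exp (\<theta>/2) - 1) + norm (exp (3/2*\<theta>) - 1)"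
    using norm_triangle_ineq[of "exp (\<theta>/2) - 1" "exp (3/2*\<theta>) - 1"] by simp
  also have "\<dots> \<le> 6 * norm \<theta>" using e1 e2 n1 n2 by simp
  finally show a: "norm (cp \<theta> - 2) \<le> 6 * norm \<theta>" .
  have "cm \<theta> = (exp (\<theta>/2) - 1) - (exp (3/2*\<theta>) - 1)" by (simp add: cm_def)
  then have "norm (cm \<theta>) \<le> norm (exp (\<theta>/2) - 1) + norm (exp (3/2*\<theta>) - 1)"
    using norm_triangle_ineq4[of "exp (\<theta>/2) - 1" "exp (3/2*\<theta>) - 1"] by simp
  also have "\<dots> \<le> 6 * norm \<theta>" using e1 e2 n1 n2 by simp
  finally show b: "norm (cm \<theta>) \<le> 6 * norm \<theta>" .
  show "norm (cm \<theta>) \<le> 1/2" using b th by simp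
  have "norm (cp \<theta>) \<le> norm (cp \<theta> - 2) + norm (2::complex)"
    using norm_triangle_ineq[of "cp \<theta> - 2" 2] by simp
  then show "norm (cp \<theta>) \<le> 3" using a th by simp
  have "norm (2::complex) \<le> norm (cp \<theta>) + norm (cp \<theta> - 2)"
    using norm_triangle_ineq4[of "cp \<theta>" "cp \<theta> - 2"] by simp
  then show "norm (cp \<theta>) \<ge> 3/2" using a th by simp
qed

lemma dd_bound:
  fixes \<theta> :: complex assumes th: "norm \<theta> \<le> 1/16"
  shows "norm (dd a b h \<theta> k) \<ge> 2"
proof -
  note cb = coef_bounds[OF th]
  have "norm ((cp \<theta>)^2 * ei (- k*(b-a)/h)) \<le> norm (dd a b h \<theta> k) + norm ((cm \<theta>)^2 * ei (k*(b-a)/h))"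
    unfolding dd_def
    using norm_triangle_ineq[of "(cp \<theta>)^2 * ei (- k*(b-a)/h) - (cm \<theta>)^2 * ei (k*(b-a)/h)" "(cm \<theta>)^2 * ei (k*(b-a)/h)"]
    by simp
  moreover have "norm ((cp \<theta>)^2 * ei (- k*(b-a)/h)) = (norm (cp \<theta>))^2"
    by (simp add: norm_mult norm_power)
  moreover have "norm ((cm \<theta>)^2 * ei (k*(b-a)/h)) = (norm (cm \<theta>))^2"
    by (simp add: norm_mult norm_power)
  moreover have "(norm (cp \<theta>))^2 \<ge> (3/2)^2"
    using cb(4) by (intro power_mono) auto
  moreover have "(norm (cm \<theta>))^2 \<le> (1/2)^2"
    using cb(5) by (intro power_mono) auto
  ultimately show ?thesis by (simp add: power2_eq_square)
qed

lemma div_bound: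
  fixes X d :: complex
  assumes "norm d \<ge> 2" "norm X \<le> 2 * c"
  shows "norm (X / d) \<le> c"
proof -
  have c: "c \<ge> 0" using assms(2) norm_ge_zero[of X] by linarith
  have "norm (X / d) = norm X / norm d" by (simp add: norm_divide)
  also have "\<dots> \<le> (2 * c) / 2"
    using assms c by (intro frac_le) auto
  finally show ?thesis by simp
qed

lemma AA_bound:
  fixes \<theta> :: complex assumes th: "norm \<theta> \<le> 1/16"
  shows "norm (AA a b h \<theta> k - 1) \<le> 20 * norm \<theta>"
proof -
  note cb = coef_bounds[OF th]
  define E1 where "E1 = ei (- k*(b-a)/h)"
  define E2 where "E2 = ei (k*(b-a)/h)"
  define d where "d = dd a b h \<theta> k"
  have d2: "norm d \<ge> 2" unfolding d_def by (rule dd_bound[OF th])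
  then have dnz: "d \<noteq> 0" by auto
  have dE: "d = (cp \<theta>)^2 * E1 - (cm \<theta>)^2 * E2" unfolding d_def dd_def E1_def E2_def ..
  have eq: "AA a b h \<theta> k - 1 = (cp \<theta> * (2 - cp \<theta>) * E1 + (cm \<theta>)^2 * E2) / d"
  proof -
    have "AA a b h \<theta> k = 2 * cp \<theta> * E1 / d" unfolding AA_def E1_def d_def ..
    then have "AA a b h \<theta> k - 1 = (2 * cp \<theta> * E1 - d) / d" using dnz by (simp add: field_simps)
    also have "2 * cp \<theta> * E1 - d = cp \<theta> * (2 - cp \<theta>) * E1 + (cm \<theta>)^2 * E2"
      unfolding dE by (simp add: algebra_simps power2_eq_square)
    finally show ?thesis .
  qed
  have "norm (cp \<theta> * (2 - cp \<theta>) * E1 + (cm \<theta>)^2 * E2) \<le> norm (cp \<theta>) * norm (2 - cp \<theta>) + norm (cm \<theta>) * norm (cm \<theta>)"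
    using norm_triangle_ineq[of "cp \<theta> * (2 - cp \<theta>) * E1" "(cm \<theta>)^2 * E2"]
    by (simp add: norm_mult norm_power E1_def E2_def power2_eq_square)
  also have "\<dots> \<le> 3 * (6 * norm \<theta>) + (1/2) * (6 * norm \<theta>)"
  proof (intro add_mono mult_mono)
    show "norm (2 - cp \<theta>) \<le> 6 * norm \<theta>" using cb(1) by (simp add: norm_minus_commute)
  qed (use cb in auto)
  also have "\<dots> \<le> 2 * (20 * norm \<theta>)" by simp
  finally show ?thesis unfolding eq by (rule div_bound[OF d2])
qed

lemma TT_bound:
  fixes \<theta> :: complex assumes th: "norm \<theta> \<le> 1/16"
  shows "norm (TT a b h \<theta> k - 1) \<le> 20 * norm \<theta>"
proof -
  note cb = coef_bounds[OF th]
  define E1 where "E1 = ei (- k*(b-a)/h)"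
  define E2 where "E2 = ei (k*(b-a)/h)"
  define d where "d = dd a b h \<theta> k"
  have d2: "norm d \<ge> 2" unfolding d_def by (rule dd_bound[OF th])
  then have dnz: "d \<noteq> 0" by auto
  have dE: "d = (cp \<theta>)^2 * E1 - (cm \<theta>)^2 * E2" unfolding d_def dd_def E1_def E2_def ..
  have eq: "TT a b h \<theta> k - 1 = ((cm \<theta>)^2 * E2 - (cm \<theta>)^2 * E1) / d"
  proof -
    have "TT a b h \<theta> k = E1 * ((cp \<theta>)^2 - (cm \<theta>)^2) / d" unfolding TT_def E1_def d_def ..
    then have "TT a b h \<theta> k - 1 = (E1 * ((cp \<theta>)^2 - (cm \<theta>)^2) - d) / d" using dnz by (simp add: field_simps)
    also have "E1 * ((cp \<theta>)^2 - (cm \<theta>)^2) - d = (cm \<theta>)^2 * E2 - (cm \<theta>)^2 * E1"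
      unfolding dE by (simp add: algebra_simps)
    finally show ?thesis .
  qed
  have "norm ((cm \<theta>)^2 * E2 - (cm \<theta>)^2 * E1) \<le> norm (cm \<theta>) * norm (cm \<theta>) + norm (cm \<theta>) * norm (cm \<theta>)"
    using norm_triangle_ineq4[of "(cm \<theta>)^2 * E2" "(cm \<theta>)^2 * E1"]
    by (simp add: norm_mult norm_power E1_def E2_def power2_eq_square)
  also have "\<dots> \<le> (1/2) * (6 * norm \<theta>) + (1/2) * (6 * norm \<theta>)"
    by (intro add_mono mult_mono) (use cb in auto)
  also have "\<dots> \<le> 2 * (20 * norm \<theta>)" by simp
  finally show ?thesis unfolding eq by (rule div_bound[OF d2])
qed

lemma BB_bound:
  fixes \<theta> :: complex assumes th: "norm \<theta> \<le> 1/16"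
  shows "norm (BB a b h \<theta> k) \<le> 20 * norm \<theta>"
proof -
  note cb = coef_bounds[OF th]
  have d2: "norm (dd a b h \<theta> k) \<ge> 2" by (rule dd_bound[OF th])
  have "norm (- 2 * cm \<theta> * ei (2*k*a/h) * ei (k*(b-a)/h)) = 2 * norm (cm \<theta>)"
    by (simp add: norm_mult)
  also have "\<dots> \<le> 2 * (20 * norm \<theta>)" using cb(2) norm_ge_zero[of \<theta>] by linarith
  finally show ?thesis unfolding BB_def by (rule div_bound[OF d2])
qed

lemma RR_bound:
  fixes \<theta> :: complex assumes th: "norm \<theta> \<le> 1/16"
  shows "norm (RR a b h \<theta> k) \<le> 20 * norm \<theta>"
proof -
  note cb = coef_bounds[OF th]
  have d2: "norm (dd a b h \<theta> k) \<ge> 2" by (rule dd_bound[OF th])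
  have "norm (- 2 * \<i> * cp \<theta> * cm \<theta> * ei (2*k*a/h) * of_real (sin (k*(b-a)/h)))
      = 2 * norm (cp \<theta>) * norm (cm \<theta>) * \<bar>sin (k*(b-a)/h)\<bar>"
    by (simp add: norm_mult)
  also have "\<dots> \<le> 2 * 3 * (6 * norm \<theta>) * 1"
    by (intro mult_mono) (use cb in auto)
  also have "\<dots> \<le> 2 * (20 * norm \<theta>)" by simp
  finally show ?thesis unfolding RR_def by (rule div_bound[OF d2])
qed

definition reg :: "real \<Rightarrow> real \<Rightarrow> real \<Rightarrow> nat" where
  "reg a b x = (if x < a then 0 else if x < b then 1 else 2)"

definition alph :: "real \<Rightarrow> real \<Rightarrow> real \<Rightarrow> complex \<Rightarrow> nat \<Rightarrow> real \<Rightarrow> complex" where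
  "alph a b h \<theta> j k = (if k > 0 then
      (if j = 0 then 0 else if j = 1 then AA a b h \<theta> k - 1 else TT a b h \<theta> k - 1)
    else (if j = 0 then TT a b h \<theta> (-k) - 1 else if j = 1 then AA a b h \<theta> (-k) - 1 else 0))"

definition bet :: "real \<Rightarrow> real \<Rightarrow> real \<Rightarrow> complex \<Rightarrow> nat \<Rightarrow> real \<Rightarrow> complex" where
  "bet a b h \<theta> j k = (if k > 0 then
      (if j = 0 then RR a b h \<theta> k else if j = 1 then BB a b h \<theta> k else 0)
    else (if j = 0 then 0 else if j = 1 then ei (4*k*a/h) * ei (2*k*(b-a)/h) * BB a b h \<theta> (-k)
          else ei (4*k*a/h) * ei (2*k*(b-a)/h) * RR a b h \<theta> (-k)))"

lemma psi_decomp: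
  "psi a b h \<theta> k x = ei (k*x/h) + alph a b h \<theta> (reg a b x) k * ei (k*x/h)
      + bet a b h \<theta> (reg a b x) k * ei (- k*x/h)"
  unfolding psi_def alph_def bet_def reg_def Let_def
  by (simp add: algebra_simps)

lemma alph_bound:
  fixes \<theta> :: complex assumes th: "norm \<theta> \<le> 1/16"
  shows "norm (alph a b h \<theta> j k) \<le> 20 * norm \<theta>"
  unfolding alph_def using AA_bound[OF th] TT_bound[OF th] by auto

lemma bet_bound:
  fixes \<theta> :: complex assumes th: "norm \<theta> \<le> 1/16"
  shows "norm (bet a b h \<theta> j k) \<le> 20 * norm \<theta>"
  unfolding bet_def using BB_bound[OF th] RR_bound[OF th] by (auto simp: norm_mult)

lemma alph_measurable [measurable]: "alph a b h \<theta> j \<in> borel_measurable borel"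
  unfolding alph_def AA_def TT_def dd_def by measurable

lemma bet_measurable [measurable]: "bet a b h \<theta> j \<in> borel_measurable borel"
  unfolding bet_def BB_def RR_def dd_def by measurable

lemma density_real_distribution:
  fixes P :: "real \<Rightarrow> real"
  assumes Pm[measurable]: "P \<in> borel_measurable borel" and P0: "\<And>x. P x \<ge> 0"
  and Pi: "integrable lborel P" and m: "(\<integral>x. P x \<partial>lborel) = 1"
  shows "real_distribution (density lborel (\<lambda>x. ennreal (P x)))"
proof -
  have "emeasure (density lborel (\<lambda>x. ennreal (P x))) UNIV = (\<integral>\<^sup>+x. ennreal (P x) \<partial>lborel)"
    by (subst emeasure_density) auto
  also have "\<dots> = 1" using Pi P0 m by (subst nn_integral_eq_integral) auto
  finally have "prob_space (density lborel (\<lambda>x. ennreal (P x)))"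
    by (intro prob_spaceI) simp
  then show ?thesis
    unfolding real_distribution_def real_distribution_axioms_def by simp
qed

lemma char_density:
  fixes P :: "real \<Rightarrow> real"
  assumes Pm[measurable]: "P \<in> borel_measurable borel" and P0: "\<And>x. P x \<ge> 0"
  shows "char (density lborel (\<lambda>x. ennreal (P x))) t = (\<integral>x. complex_of_real (P x) * ei (t * x) \<partial>lborel)"
  unfolding char_def ei_def
  by (subst integral_density) (auto simp: P0 scaleR_conv_of_real)

lemma ft_unique_real:
  fixes r :: "real \<Rightarrow> real"
  assumes rm[measurable]: "r \<in> borel_measurable borel" and ri: "integrable lborel r"
  and z: "\<And>\<xi>. (\<integral>x. complex_of_real (r x) * ei (\<xi> * x) \<partial>lborel) = 0"
  shows "AE x in lborel. r x = 0"
proof -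
  define P where "P x = max (r x) 0" for x
  define Q where "Q x = max (- r x) 0" for x
  have [measurable]: "P \<in> borel_measurable borel" "Q \<in> borel_measurable borel"
    unfolding P_def Q_def by measurable
  have P0: "P x \<ge> 0" and Q0: "Q x \<ge> 0" for x unfolding P_def Q_def by auto
  have rPQ: "r x = P x - Q x" for x unfolding P_def Q_def by auto
  have Pi: "integrable lborel P" unfolding P_def using ri by (intro integrable_max) auto
  have Qi: "integrable lborel Q" unfolding Q_def using ri by (intro integrable_max) auto
  have iP: "integrable lborel (\<lambda>x. complex_of_real (P x) * ei (\<xi> * x))" for \<xi>
    by (rule Bochner_Integration.integrable_bound[where f=P]) (auto simp: Pi norm_mult P0)
  have iQ: "integrable lborel (\<lambda>x. complex_of_real (Q x) * ei (\<xi> * x))" for \<xi>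
    by (rule Bochner_Integration.integrable_bound[where f=Q]) (auto simp: Qi norm_mult Q0)
  have PQ: "(\<integral>x. complex_of_real (P x) * ei (\<xi> * x) \<partial>lborel) = (\<integral>x. complex_of_real (Q x) * ei (\<xi> * x) \<partial>lborel)" for \<xi>
  proof -
    have "(\<integral>x. complex_of_real (P x) * ei (\<xi> * x) \<partial>lborel) - (\<integral>x. complex_of_real (Q x) * ei (\<xi> * x) \<partial>lborel)
        = (\<integral>x. complex_of_real (P x) * ei (\<xi> * x) - complex_of_real (Q x) * ei (\<xi> * x) \<partial>lborel)"
      using iP iQ by (rule Bochner_Integration.integral_diff[symmetric])
    also have "\<dots> = (\<integral>x. complex_of_real (r x) * ei (\<xi> * x) \<partial>lborel)"
      by (intro Bochner_Integration.integral_cong refl) (simp add: rPQ algebra_simps)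
    also have "\<dots> = 0" by (rule z)
    finally show ?thesis by simp
  qed
  define m where "m = (\<integral>x. P x \<partial>lborel)"
  have m0: "m \<ge> 0" unfolding m_def by (simp add: P0)
  have mQ: "(\<integral>x. Q x \<partial>lborel) = m"
  proof -
    have "complex_of_real (\<integral>x. P x \<partial>lborel) = complex_of_real (\<integral>x. Q x \<partial>lborel)"
      using PQ[of 0] by simp
    then show ?thesis unfolding m_def by simp
  qed
  show ?thesis
  proof (cases "m = 0")
    case True
    have "AE x in lborel. P x = 0"
      using True Pi P0 unfolding m_def by (subst integral_nonneg_eq_0_iff_AE[symmetric]) auto
    moreover have "AE x in lborel. Q x = 0"
      using True mQ Qi Q0 by (subst integral_nonneg_eq_0_iff_AE[symmetric]) auto
    ultimately show ?thesis by eventually_elim (simp add: rPQ)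
  next
    case False
    then have mpos: "m > 0" using m0 by simp
    define M1 where "M1 = density lborel (\<lambda>x. ennreal (P x / m))"
    define M2 where "M2 = density lborel (\<lambda>x. ennreal (Q x / m))"
    have d1: "real_distribution M1" unfolding M1_def
      using Pi mpos P0 by (intro density_real_distribution) (auto simp: m_def)
    have d2: "real_distribution M2" unfolding M2_def
      using Qi mpos Q0 mQ by (intro density_real_distribution) auto
    have "char M1 = char M2"
    proof
      fix t
      have "char M1 t = (\<integral>x. complex_of_real (1/m) * (complex_of_real (P x) * ei (t * x)) \<partial>lborel)"
        unfolding M1_def using mpos P0
        by (subst char_density) (auto intro!: Bochner_Integration.integral_cong)
      also have "\<dots> = complex_of_real (1/m) * (\<integral>x. complex_of_real (P x) * ei (t * x) \<partial>lborel)"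
        by simp
      also have "\<dots> = complex_of_real (1/m) * (\<integral>x. complex_of_real (Q x) * ei (t * x) \<partial>lborel)"
        by (simp only: PQ)
      also have "\<dots> = (\<integral>x. complex_of_real (1/m) * (complex_of_real (Q x) * ei (t * x)) \<partial>lborel)"
        by simp
      also have "\<dots> = char M2 t"
        unfolding M2_def using mpos Q0
        by (subst char_density) (auto intro!: Bochner_Integration.integral_cong)
      finally show "char M1 t = char M2 t" .
    qed
    then have "M1 = M2" using Levy_uniqueness d1 d2 by blast
    then have "AE x in lborel. ennreal (P x / m) = ennreal (Q x / m)"
      unfolding M1_def M2_def by (subst (asm) sigma_finite_measure.density_unique_iff[OF sigma_finite_lborel]) auto
    then show ?thesis
    proof eventually_elim
      case (elim x)
      then have "P x / m = Q x / m" using P0[of x] Q0[of x] mpos by (simp add: ennreal_inj)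
      then show ?case using mpos by (simp add: rPQ)
    qed
  qed
qed

lemma ft_unique:
  fixes f :: "real \<Rightarrow> complex"
  assumes fm[measurable]: "f \<in> borel_measurable borel" and fi: "integrable lborel f"
  and z: "\<And>\<xi>. (\<integral>x. f x * ei (\<xi> * x) \<partial>lborel) = 0"
  shows "AE x in lborel. f x = 0"
proof -
  have i1: "integrable lborel (\<lambda>x. f x * ei (\<xi> * x))" for \<xi>
    by (rule Bochner_Integration.integrable_bound[where f="\<lambda>x. norm (f x)"]) (auto simp: fi norm_mult)
  have i2: "integrable lborel (\<lambda>x. cnj (f x) * ei (\<xi> * x))" for \<xi>
    by (rule Bochner_Integration.integrable_bound[where f="\<lambda>x. norm (f x)"]) (auto simp: fi norm_mult)
  have zc: "(\<integral>x. cnj (f x) * ei (\<xi> * x) \<partial>lborel) = 0" for \<xi>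
  proof -
    have "(\<integral>x. cnj (f x) * ei (\<xi> * x) \<partial>lborel) = (\<integral>x. cnj (f x * ei ((- \<xi>) * x)) \<partial>lborel)"
      by (intro Bochner_Integration.integral_cong refl) (simp add: cnj_ei)
    also have "\<dots> = cnj (\<integral>x. f x * ei ((- \<xi>) * x) \<partial>lborel)"
      by (rule Bochner_Integration.integral_cnj)
    also have "\<dots> = 0" using z[of "- \<xi>"] by simp
    finally show ?thesis .
  qed
  have zR: "(\<integral>x. complex_of_real (Re (f x)) * ei (\<xi> * x) \<partial>lborel) = 0" for \<xi>
  proof -
    have "(\<integral>x. complex_of_real (Re (f x)) * ei (\<xi> * x) \<partial>lborel)
        = (\<integral>x. (f x * ei (\<xi> * x) + cnj (f x) * ei (\<xi> * x)) / 2 \<partial>lborel)"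
    proof (intro Bochner_Integration.integral_cong refl)
      fix x
      have eq: "complex_of_real (Re (f x)) = (f x + cnj (f x)) / 2"
        by (simp add: complex_add_cnj)
      show "complex_of_real (Re (f x)) * ei (\<xi> * x) = (f x * ei (\<xi> * x) + cnj (f x) * ei (\<xi> * x)) / 2"
        unfolding eq by (simp add: field_simps)
    qed
    also have "\<dots> = ((\<integral>x. f x * ei (\<xi> * x) \<partial>lborel) + (\<integral>x. cnj (f x) * ei (\<xi> * x) \<partial>lborel)) / 2"
      using i1 i2 by simp
    also have "\<dots> = 0" by (simp add: z zc)
    finally show ?thesis .
  qed
  have zI: "(\<integral>x. complex_of_real (Im (f x)) * ei (\<xi> * x) \<partial>lborel) = 0" for \<xi>
  proof -
    have "(\<integral>x. complex_of_real (Im (f x)) * ei (\<xi> * x) \<partial>lborel)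
        = (\<integral>x. (f x * ei (\<xi> * x) - cnj (f x) * ei (\<xi> * x)) / (2 * \<i>) \<partial>lborel)"
    proof (intro Bochner_Integration.integral_cong refl)
      fix x
      have eq: "complex_of_real (Im (f x)) = (f x - cnj (f x)) / (2 * \<i>)"
        by (simp add: complex_diff_cnj field_simps)
      show "complex_of_real (Im (f x)) * ei (\<xi> * x) = (f x * ei (\<xi> * x) - cnj (f x) * ei (\<xi> * x)) / (2 * \<i>)"
        unfolding eq by (simp add: field_simps)
    qed
    also have "\<dots> = ((\<integral>x. f x * ei (\<xi> * x) \<partial>lborel) - (\<integral>x. cnj (f x) * ei (\<xi> * x) \<partial>lborel)) / (2 * \<i>)"
      using i1 i2 by simp
    also have "\<dots> = 0" by (simp add: z zc)
    finally show ?thesis .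
  qed
  have "AE x in lborel. Re (f x) = 0"
    by (rule ft_unique_real) (use fi zR in auto)
  moreover have "AE x in lborel. Im (f x) = 0"
    by (rule ft_unique_real) (use fi zI in auto)
  ultimately show ?thesis by eventually_elim (simp add: complex_eq_iff)
qed

lemma hFT_measurable [measurable]:
  assumes [measurable]: "u \<in> borel_measurable borel"
  shows "hFT h u \<in> borel_measurable borel"
proof -
  have "(\<lambda>k. (\<integral>y. u y * ei (- k*y/h) \<partial>lborel) / complex_of_real (sqrt (2*pi*h))) \<in> borel_measurable lborel"
    by measurable
  then show ?thesis unfolding hFT_def[abs_def] by simp
qed

lemma inversion:
  fixes u :: "real \<Rightarrow> complex" and h :: real
  assumes h: "h > 0" and um[measurable]: "u \<in> borel_measurable borel"
  and ui: "integrable lborel u" and Fi: "integrable lborel (hFT h u)"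
  shows "AE x in lborel. (\<integral>k. hFT h u k * ei (k*x/h) \<partial>lborel) / complex_of_real (sqrt (2*pi*h)) = u x"
proof -
  define c where "c = sqrt (2*pi*h)"
  have c: "c > 0" using h by (simp add: c_def)
  have c2: "c * c = 2*pi*h" using h by (simp add: c_def)
  define F where "F = hFT h u"
  have Fm[measurable]: "F \<in> borel_measurable borel" unfolding F_def by measurable
  have Fi': "integrable lborel F" using Fi by (simp add: F_def)
  have Fdef: "F k = (\<integral>y. u y * ei (- k*y/h) \<partial>lborel) / complex_of_real c" for k
    unfolding F_def hFT_def c_def ..
  define NF where "NF = (\<integral>k. norm (F k) \<partial>lborel)"
  have NF0: "NF \<ge> 0" unfolding NF_def by simp
  define v where "v x = (\<integral>k. F k * ei (k*x/h) \<partial>lborel) / complex_of_real c" for x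
  have vm[measurable]: "v \<in> borel_measurable borel"
  proof -
    have "(\<lambda>x. (\<integral>k. F k * ei (k*x/h) \<partial>lborel) / complex_of_real c) \<in> borel_measurable lborel"
      by measurable
    then show ?thesis unfolding v_def[abs_def] by simp
  qed
  have vb: "norm (v x) \<le> NF / c" for x
  proof -
    have "norm (\<integral>k. F k * ei (k*x/h) \<partial>lborel) \<le> (\<integral>k. norm (F k * ei (k*x/h)) \<partial>lborel)"
      by (rule integral_norm_bound)
    then show ?thesis unfolding v_def NF_def using c
      by (simp add: norm_divide norm_mult divide_right_mono)
  qed
  define G where "G x = exp (- ((x::real)\<^sup>2))" for x
  have G0: "G x \<ge> 0" for x by (simp add: G_def)
  have Gle: "G x \<le> 1" for x by (simp add: G_def)
  have Gi: "integrable lborel G" unfolding G_def using gauss_real(1)[of 1] by simp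
  have [measurable]: "G \<in> borel_measurable borel" unfolding G_def by measurable
  define g where "g \<xi> k = sqrt pi * exp (- (1/4) * (\<xi> + (1/h) * k)\<^sup>2)" for \<xi> k
  have g0: "g \<xi> k \<ge> 0" for \<xi> k by (simp add: g_def)
  have gi: "integrable lborel (g \<xi>)" for \<xi>
  proof -
    have "integrable lborel (\<lambda>s. sqrt pi * exp (- (1/4) * s\<^sup>2))"
      using gauss_real(1)[of "1/4"] by simp
    then have "integrable lborel (\<lambda>k. sqrt pi * exp (- (1/4) * (\<xi> + (1/h) * k)\<^sup>2))"
      using h by (intro lborel_integrable_real_affine) auto
    then show ?thesis unfolding g_def[abs_def] .
  qed
  have [measurable]: "g \<xi> \<in> borel_measurable borel" for \<xi> unfolding g_def by measurable
  have step1: "(\<integral>x. v x * complex_of_real (G x) * ei (\<xi> * x) \<partial>lborel)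
      = (\<integral>k. F k * complex_of_real (g \<xi> k) \<partial>lborel) / complex_of_real c" for \<xi>
  proof -
    have "(\<integral>x. v x * complex_of_real (G x) * ei (\<xi> * x) \<partial>lborel)
        = (\<integral>x. (\<integral>k. F k * (complex_of_real (G x) * ei ((\<xi> + (1/h) * k) * x)) \<partial>lborel) / complex_of_real c \<partial>lborel)"
    proof (intro Bochner_Integration.integral_cong refl)
      fix x
      have "v x * complex_of_real (G x) * ei (\<xi> * x)
          = (\<integral>k. F k * ei (k*x/h) \<partial>lborel) * (complex_of_real (G x) * ei (\<xi> * x)) / complex_of_real c"
        unfolding v_def by simp
      also have "(\<integral>k. F k * ei (k*x/h) \<partial>lborel) * (complex_of_real (G x) * ei (\<xi> * x))
          = (\<integral>k. F k * ei (k*x/h) * (complex_of_real (G x) * ei (\<xi> * x)) \<partial>lborel)"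
        by (rule integral_mult_left_zero[symmetric])
      also have "\<dots> = (\<integral>k. F k * (complex_of_real (G x) * ei ((\<xi> + (1/h) * k) * x)) \<partial>lborel)"
        by (intro Bochner_Integration.integral_cong refl) (simp add: ei_mult algebra_simps)
      finally show "v x * complex_of_real (G x) * ei (\<xi> * x)
          = (\<integral>k. F k * (complex_of_real (G x) * ei ((\<xi> + (1/h) * k) * x)) \<partial>lborel) / complex_of_real c" .
    qed
    also have "\<dots> = (\<integral>x. (\<integral>k. F k * (complex_of_real (G x) * ei ((\<xi> + (1/h) * k) * x)) \<partial>lborel) \<partial>lborel) / complex_of_real c"
      by simp
    also have "(\<integral>x. (\<integral>k. F k * (complex_of_real (G x) * ei ((\<xi> + (1/h) * k) * x)) \<partial>lborel) \<partial>lborel)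
        = (\<integral>k. (\<integral>x. F k * (complex_of_real (G x) * ei ((\<xi> + (1/h) * k) * x)) \<partial>lborel) \<partial>lborel)"
      by (rule fubini_bd(2)[where p="\<lambda>k. norm (F k)" and q=G])
         (measurable, auto simp: Fi' Gi G0 norm_mult)
    also have "\<dots> = (\<integral>k. F k * complex_of_real (g \<xi> k) \<partial>lborel)"
    proof (intro Bochner_Integration.integral_cong refl)
      fix k
      have "(\<integral>x. complex_of_real (exp (- 1 * x\<^sup>2)) * ei ((\<xi> + (1/h) * k) * x) \<partial>lborel)
          = complex_of_real (g \<xi> k)"
        using gauss_ft(2)[of 1 "\<xi> + (1/h) * k"] by (simp add: g_def)
      then have "(\<integral>x. complex_of_real (G x) * ei ((\<xi> + (1/h) * k) * x) \<partial>lborel) = complex_of_real (g \<xi> k)"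
        unfolding G_def by simp
      then show "(\<integral>x. F k * (complex_of_real (G x) * ei ((\<xi> + (1/h) * k) * x)) \<partial>lborel) = F k * complex_of_real (g \<xi> k)"
        by simp
    qed
    finally show ?thesis .
  qed
  have step3: "(\<integral>k. ei (- k*y/h) * complex_of_real (g \<xi> k) \<partial>lborel)
      = complex_of_real (2 * pi * h) * ei (\<xi> * y) * complex_of_real (G y)" for \<xi> y
  proof -
    let ?f = "\<lambda>k. ei (- k*y/h) * complex_of_real (g \<xi> k)"
    have "(\<integral>k. ?f k \<partial>lborel) = \<bar>h\<bar> *\<^sub>R (\<integral>s. ?f (- h * \<xi> + h * s) \<partial>lborel)"
      using h by (intro lborel_integral_real_affine) simp
    also have "(\<integral>s. ?f (- h * \<xi> + h * s) \<partial>lborel)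
        = (\<integral>s. (ei (\<xi> * y) * complex_of_real (sqrt pi)) * (complex_of_real (exp (- (1/4) * s\<^sup>2)) * ei ((- y) * s)) \<partial>lborel)"
    proof (intro Bochner_Integration.integral_cong refl)
      fix s
      have a2: "\<xi> + (1/h) * (- h * \<xi> + h * s) = s" using h by (simp add: field_simps)
      have a1: "- (- h * \<xi> + h * s) * y / h = \<xi> * y + (- y) * s" using h by (simp add: field_simps)
      show "?f (- h * \<xi> + h * s)
          = (ei (\<xi> * y) * complex_of_real (sqrt pi)) * (complex_of_real (exp (- (1/4) * s\<^sup>2)) * ei ((- y) * s))"
        unfolding g_def a1 a2 ei_mult[symmetric] by (simp only: of_real_mult mult_ac)
    qed
    also have "\<dots> = (ei (\<xi> * y) * complex_of_real (sqrt pi)) * complex_of_real (sqrt (pi / (1/4)) * exp (- (- y)\<^sup>2 / (4 * (1/4))))"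
      using gauss_ft(2)[of "1/4" "- y"] by (subst integral_mult_right_zero) simp
    also have "\<bar>h\<bar> *\<^sub>R ((ei (\<xi> * y) * complex_of_real (sqrt pi)) * complex_of_real (sqrt (pi / (1/4)) * exp (- (- y)\<^sup>2 / (4 * (1/4)))))
        = ei (\<xi> * y) * complex_of_real (h * (sqrt pi * (2 * sqrt pi * exp (- y\<^sup>2))))"
    proof -
      have sq4: "sqrt (pi * 4) = 2 * sqrt pi" by (simp add: real_sqrt_mult)
      have sq4': "complex_of_real (sqrt (pi * 4)) = 2 * complex_of_real (sqrt pi)" by (simp add: sq4)
      show ?thesis using h by (simp add: scaleR_conv_of_real sq4' mult_ac)
    qed
    also have "h * (sqrt pi * (2 * sqrt pi * exp (- y\<^sup>2))) = 2 * pi * h * G y"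
    proof -
      have "sqrt pi * sqrt pi = pi" by simp
      then show ?thesis unfolding G_def by (simp add: algebra_simps)
    qed
    finally show ?thesis by (simp add: mult_ac)
  qed
  have step2: "(\<integral>k. F k * complex_of_real (g \<xi> k) \<partial>lborel)
      = (\<integral>y. u y * (complex_of_real (2 * pi * h) * ei (\<xi> * y) * complex_of_real (G y)) \<partial>lborel) / complex_of_real c" for \<xi>
  proof -
    have "(\<integral>k. F k * complex_of_real (g \<xi> k) \<partial>lborel)
        = (\<integral>k. (\<integral>y. u y * (ei (- k*y/h) * complex_of_real (g \<xi> k)) \<partial>lborel) / complex_of_real c \<partial>lborel)"
    proof (intro Bochner_Integration.integral_cong refl)
      fix k
      show "F k * complex_of_real (g \<xi> k) = (\<integral>y. u y * (ei (- k*y/h) * complex_of_real (g \<xi> k)) \<partial>lborel) / complex_of_real c"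
      proof -
        have "F k * complex_of_real (g \<xi> k) = ((\<integral>y. u y * ei (- k*y/h) \<partial>lborel) * complex_of_real (g \<xi> k)) / complex_of_real c"
          unfolding Fdef by simp
        also have "(\<integral>y. u y * ei (- k*y/h) \<partial>lborel) * complex_of_real (g \<xi> k) = (\<integral>y. u y * ei (- k*y/h) * complex_of_real (g \<xi> k) \<partial>lborel)"
          by (rule integral_mult_left_zero[symmetric])
        finally show ?thesis by (simp add: mult.assoc)
      qed
    qed
    also have "\<dots> = (\<integral>k. (\<integral>y. u y * (ei (- k*y/h) * complex_of_real (g \<xi> k)) \<partial>lborel) \<partial>lborel) / complex_of_real c"
      by simp
    also have "(\<integral>k. (\<integral>y. u y * (ei (- k*y/h) * complex_of_real (g \<xi> k)) \<partial>lborel) \<partial>lborel)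
        = (\<integral>y. (\<integral>k. u y * (ei (- k*y/h) * complex_of_real (g \<xi> k)) \<partial>lborel) \<partial>lborel)"
      by (rule fubini_bd(2)[where p="\<lambda>y. norm (u y)" and q="g \<xi>"])
         (measurable, auto simp: ui gi g0 norm_mult)
    also have "\<dots> = (\<integral>y. u y * (complex_of_real (2 * pi * h) * ei (\<xi> * y) * complex_of_real (G y)) \<partial>lborel)"
    proof (intro Bochner_Integration.integral_cong refl)
      fix y
      show "(\<integral>k. u y * (ei (- k*y/h) * complex_of_real (g \<xi> k)) \<partial>lborel)
          = u y * (complex_of_real (2 * pi * h) * ei (\<xi> * y) * complex_of_real (G y))"
        by (subst integral_mult_right_zero) (simp only: step3)
    qed
    finally show ?thesis .
  qed
  have uGi: "integrable lborel (\<lambda>x. u x * complex_of_real (G x) * ei (\<xi> * x))" for \<xi>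
  proof (rule Bochner_Integration.integrable_bound[where f="\<lambda>x. norm (u x)"])
    show "integrable lborel (\<lambda>x. norm (u x))" using ui by simp
    show "(\<lambda>x. u x * complex_of_real (G x) * ei (\<xi> * x)) \<in> borel_measurable lborel" by measurable
    show "AE x in lborel. norm (u x * complex_of_real (G x) * ei (\<xi> * x)) \<le> norm (norm (u x))"
    proof (intro AE_I2)
      fix x
      have "norm (u x) * G x \<le> norm (u x) * 1" by (intro mult_left_mono Gle) simp
      then show "norm (u x * complex_of_real (G x) * ei (\<xi> * x)) \<le> norm (norm (u x))"
        by (simp add: norm_mult G0)
    qed
  qed
  have vGi: "integrable lborel (\<lambda>x. v x * complex_of_real (G x) * ei (\<xi> * x))" for \<xi>
  proof (rule Bochner_Integration.integrable_bound[where f="\<lambda>x. NF / c * G x"])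
    show "integrable lborel (\<lambda>x. NF / c * G x)" using Gi by simp
    show "(\<lambda>x. v x * complex_of_real (G x) * ei (\<xi> * x)) \<in> borel_measurable lborel" by measurable
    show "AE x in lborel. norm (v x * complex_of_real (G x) * ei (\<xi> * x)) \<le> norm (NF / c * G x)"
    proof (intro AE_I2)
      fix x
      have "norm (v x) * G x \<le> NF / c * G x" by (intro mult_right_mono vb G0)
      then show "norm (v x * complex_of_real (G x) * ei (\<xi> * x)) \<le> norm (NF / c * G x)"
        using NF0 c by (simp add: norm_mult G0)
    qed
  qed
  have same: "(\<integral>x. v x * complex_of_real (G x) * ei (\<xi> * x) \<partial>lborel) = (\<integral>x. u x * complex_of_real (G x) * ei (\<xi> * x) \<partial>lborel)" for \<xi>
  proof -
    have "(\<integral>x. v x * complex_of_real (G x) * ei (\<xi> * x) \<partial>lborel)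
        = (\<integral>y. u y * (complex_of_real (2 * pi * h) * ei (\<xi> * y) * complex_of_real (G y)) \<partial>lborel) / (complex_of_real c * complex_of_real c)"
      by (simp add: step1 step2)
    also have "complex_of_real c * complex_of_real c = complex_of_real (2 * pi * h)"
      by (simp flip: of_real_mult add: c2)
    also have "(\<integral>y. u y * (complex_of_real (2 * pi * h) * ei (\<xi> * y) * complex_of_real (G y)) \<partial>lborel) / complex_of_real (2 * pi * h)
        = (\<integral>y. u y * complex_of_real (G y) * ei (\<xi> * y) \<partial>lborel)"
    proof -
      have nz: "complex_of_real (2 * pi * h) \<noteq> 0" using h by simp
      have "(\<integral>y. u y * (complex_of_real (2 * pi * h) * ei (\<xi> * y) * complex_of_real (G y)) \<partial>lborel)
          = (\<integral>y. complex_of_real (2 * pi * h) * (u y * complex_of_real (G y) * ei (\<xi> * y)) \<partial>lborel)"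
        by (intro Bochner_Integration.integral_cong refl) (simp add: mult_ac)
      also have "\<dots> = complex_of_real (2 * pi * h) * (\<integral>y. u y * complex_of_real (G y) * ei (\<xi> * y) \<partial>lborel)"
        by (rule integral_mult_right_zero)
      finally show ?thesis using nz by simp
    qed
    finally show ?thesis .
  qed
  define w where "w x = (v x - u x) * complex_of_real (G x)" for x
  have wm[measurable]: "w \<in> borel_measurable borel" unfolding w_def by measurable
  have wi: "integrable lborel w"
  proof (rule Bochner_Integration.integrable_bound[where f="\<lambda>x. NF / c * G x + norm (u x)"])
    show "integrable lborel (\<lambda>x. NF / c * G x + norm (u x))" using Gi ui by simp
    show "w \<in> borel_measurable lborel" by simp
    show "AE x in lborel. norm (w x) \<le> norm (NF / c * G x + norm (u x))"
    proof (intro AE_I2)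
      fix x
      have "norm (w x) \<le> (norm (v x) + norm (u x)) * G x"
        unfolding w_def by (simp add: norm_mult G0 mult_right_mono norm_triangle_ineq4)
      also have "\<dots> = norm (v x) * G x + norm (u x) * G x" by (simp add: distrib_right)
      also have "\<dots> \<le> NF / c * G x + norm (u x) * 1"
        by (intro add_mono mult_right_mono mult_left_mono vb Gle G0) simp
      finally show "norm (w x) \<le> norm (NF / c * G x + norm (u x))"
        using NF0 c G0[of x] by (simp add: abs_of_nonneg)
    qed
  qed
  have "AE x in lborel. w x = 0"
  proof (rule ft_unique[OF wm wi])
    fix \<xi>
    have "(\<integral>x. w x * ei (\<xi> * x) \<partial>lborel)
        = (\<integral>x. v x * complex_of_real (G x) * ei (\<xi> * x) - u x * complex_of_real (G x) * ei (\<xi> * x) \<partial>lborel)"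
      unfolding w_def by (intro Bochner_Integration.integral_cong refl) (simp add: algebra_simps)
    also have "\<dots> = 0" using vGi uGi same by simp
    finally show "(\<integral>x. w x * ei (\<xi> * x) \<partial>lborel) = 0" .
  qed
  then show ?thesis
  proof eventually_elim
    case (elim x)
    have "G x \<noteq> 0" by (simp add: G_def)
    then have "v x = u x" using elim unfolding w_def by simp
    then show ?case unfolding v_def F_def c_def .
  qed
qed

lemma L2mult:
  fixes g m :: "real \<Rightarrow> complex" and t M :: real
  assumes t: "t \<noteq> 0" and gm[measurable]: "g \<in> borel_measurable borel" and gi: "integrable lborel g"
  and mm[measurable]: "m \<in> borel_measurable borel" and mb: "\<And>k. norm (m k) \<le> M"
  shows "(\<integral>\<^sup>+x. ennreal ((cmod (\<integral>k. (m k * g k) * ei (t*k*x) \<partial>lborel))\<^sup>2) \<partial>lborel)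
     \<le> ennreal (2*pi/\<bar>t\<bar> * M\<^sup>2) * (\<integral>\<^sup>+k. ennreal ((cmod (g k))\<^sup>2) \<partial>lborel)"
proof -
  have M0: "M \<ge> 0" using mb[of 0] norm_ge_zero[of "m 0"] by linarith
  have mgi: "integrable lborel (\<lambda>k. m k * g k)"
  proof (rule Bochner_Integration.integrable_bound[where f="\<lambda>k. M * norm (g k)"])
    show "integrable lborel (\<lambda>k. M * norm (g k))" using gi by simp
    show "(\<lambda>k. m k * g k) \<in> borel_measurable lborel" by measurable
    show "AE x in lborel. norm (m x * g x) \<le> norm (M * norm (g x))"
      using M0 by (intro AE_I2) (simp add: norm_mult mult_right_mono mb)
  qed
  have "(\<integral>\<^sup>+x. ennreal ((cmod (\<integral>k. (m k * g k) * ei (t*k*x) \<partial>lborel))\<^sup>2) \<partial>lborel)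
     \<le> ennreal (2*pi/\<bar>t\<bar>) * (\<integral>\<^sup>+k. ennreal ((cmod (m k * g k))\<^sup>2) \<partial>lborel)"
    by (rule bessel[OF t _ mgi]) measurable
  also have "(\<integral>\<^sup>+k. ennreal ((cmod (m k * g k))\<^sup>2) \<partial>lborel) \<le> (\<integral>\<^sup>+k. ennreal (M\<^sup>2) * ennreal ((cmod (g k))\<^sup>2) \<partial>lborel)"
  proof (intro nn_integral_mono)
    fix k
    have "(cmod (m k * g k))\<^sup>2 = (cmod (m k))\<^sup>2 * (cmod (g k))\<^sup>2" by (simp add: norm_mult power_mult_distrib)
    also have "\<dots> \<le> M\<^sup>2 * (cmod (g k))\<^sup>2"
      by (intro mult_right_mono power_mono mb) auto
    finally show "ennreal ((cmod (m k * g k))\<^sup>2) \<le> ennreal (M\<^sup>2) * ennreal ((cmod (g k))\<^sup>2)"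
      by (simp add: ennreal_mult[symmetric] ennreal_leI)
  qed
  also have "\<dots> = ennreal (M\<^sup>2) * (\<integral>\<^sup>+k. ennreal ((cmod (g k))\<^sup>2) \<partial>lborel)"
    by (rule nn_integral_cmult) measurable
  finally have "(\<integral>\<^sup>+x. ennreal ((cmod (\<integral>k. (m k * g k) * ei (t*k*x) \<partial>lborel))\<^sup>2) \<partial>lborel)
     \<le> ennreal (2*pi/\<bar>t\<bar>) * (ennreal (M\<^sup>2) * (\<integral>\<^sup>+k. ennreal ((cmod (g k))\<^sup>2) \<partial>lborel))"
    by (simp add: mult_left_mono)
  moreover have e: "ennreal (2*pi/\<bar>t\<bar> * M\<^sup>2) = ennreal (2*pi/\<bar>t\<bar>) * ennreal (M\<^sup>2)"
    by (rule ennreal_mult) auto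
  ultimately show ?thesis unfolding e by (simp only: mult.assoc)
qed

lemma FT_L2:
  fixes u :: "real \<Rightarrow> complex" and h :: real
  assumes h: "h > 0" and um[measurable]: "u \<in> borel_measurable borel" and ui: "integrable lborel u"
  shows "(\<integral>\<^sup>+k. ennreal ((cmod (hFT h u k))\<^sup>2) \<partial>lborel) \<le> (\<integral>\<^sup>+y. ennreal ((cmod (u y))\<^sup>2) \<partial>lborel)"
proof -
  define c where "c = sqrt (2*pi*h)"
  have c: "c > 0" using h by (simp add: c_def)
  have c2: "c\<^sup>2 = 2*pi*h" using h by (simp add: c_def)
  have t: "- 1/h \<noteq> 0" using h by simp
  have eq: "(cmod (hFT h u k))\<^sup>2 = (1 / c\<^sup>2) * (cmod (\<integral>y. u y * ei ((- 1/h) * y * k) \<partial>lborel))\<^sup>2" for k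
  proof -
    have "hFT h u k = (\<integral>y. u y * ei ((- 1/h) * y * k) \<partial>lborel) / complex_of_real c"
      unfolding hFT_def c_def by (simp add: mult_ac)
    then show ?thesis using c by (simp add: norm_divide power_divide)
  qed
  have "(\<integral>\<^sup>+k. ennreal ((cmod (hFT h u k))\<^sup>2) \<partial>lborel)
      = (\<integral>\<^sup>+k. ennreal (1 / c\<^sup>2) * ennreal ((cmod (\<integral>y. u y * ei ((- 1/h) * y * k) \<partial>lborel))\<^sup>2) \<partial>lborel)"
  proof (intro nn_integral_cong)
    fix k
    show "ennreal ((cmod (hFT h u k))\<^sup>2) = ennreal (1 / c\<^sup>2) * ennreal ((cmod (\<integral>y. u y * ei ((- 1/h) * y * k) \<partial>lborel))\<^sup>2)"
      unfolding eq by (rule ennreal_mult) auto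
  qed
  also have "\<dots> = ennreal (1 / c\<^sup>2) * (\<integral>\<^sup>+k. ennreal ((cmod (\<integral>y. u y * ei ((- 1/h) * y * k) \<partial>lborel))\<^sup>2) \<partial>lborel)"
    by (rule nn_integral_cmult) measurable
  also have "\<dots> \<le> ennreal (1 / c\<^sup>2) * (ennreal (2*pi/\<bar>- 1/h\<bar>) * (\<integral>\<^sup>+y. ennreal ((cmod (u y))\<^sup>2) \<partial>lborel))"
    by (intro mult_left_mono bessel[OF t um ui]) simp
  also have "\<dots> = (\<integral>\<^sup>+y. ennreal ((cmod (u y))\<^sup>2) \<partial>lborel)"
  proof -
    have "(1 / c\<^sup>2) * (2*pi/\<bar>- 1/h\<bar>) = 1" using h c2 c by (simp add: field_simps)
    then have "ennreal (1 / c\<^sup>2) * ennreal (2*pi/\<bar>- 1/h\<bar>) = 1"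
      using h by (simp add: ennreal_mult[symmetric])
    then show ?thesis by (simp add: mult.assoc[symmetric])
  qed
  finally show ?thesis .
qed

lemma psi_meas [measurable]: "(\<lambda>(k, x). psi a b h \<theta> k x) \<in> borel_measurable (lborel \<Otimes>\<^sub>M lborel)"
  unfolding psi_def Let_def AA_def BB_def TT_def RR_def dd_def by measurable

lemma Wop_meas:
  assumes [measurable]: "u \<in> borel_measurable borel"
  shows "Wop a b h \<theta> u \<in> borel_measurable borel"
proof -
  have [measurable]: "(\<lambda>(x, k). psi a b h \<theta> k x) \<in> borel_measurable (lborel \<Otimes>\<^sub>M lborel)"
    using measurable_pair_swap[OF psi_meas] by (simp add: split_beta)
  have "(\<lambda>x. (\<integral>k. psi a b h \<theta> k x * hFT h u k \<partial>lborel) / complex_of_real (sqrt (2*pi*h))) \<in> borel_measurable lborel"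
    by measurable
  then show ?thesis unfolding Wop_def[abs_def] by simp
qed

lemma main_bound:
  fixes a b h :: real and \<theta> :: complex and u :: "real \<Rightarrow> complex"
  assumes h: "h > 0" and th: "norm \<theta> \<le> 1/16" and um[measurable]: "u \<in> borel_measurable borel"
  and ui: "integrable lborel u" and Fi: "integrable lborel (hFT h u)"
  shows "(\<integral>\<^sup>+x. ennreal ((cmod (Wop a b h \<theta> u x - u x))\<^sup>2) \<partial>lborel)
     \<le> ennreal ((70 * cmod \<theta>)\<^sup>2) * (\<integral>\<^sup>+x. ennreal ((cmod (u x))\<^sup>2) \<partial>lborel)"
proof -
  define c where "c = sqrt (2*pi*h)"
  have c: "c > 0" using h by (simp add: c_def)
  have c2: "c\<^sup>2 = 2*pi*h" using h by (simp add: c_def)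
  define F where "F = hFT h u"
  have Fm[measurable]: "F \<in> borel_measurable borel" unfolding F_def by measurable
  have Fi': "integrable lborel F" using Fi by (simp add: F_def)
  define M where "M = 20 * norm \<theta>"
  have M0: "M \<ge> 0" by (simp add: M_def)
  have ab: "norm (alph a b h \<theta> j k) \<le> M" for j k unfolding M_def by (rule alph_bound[OF th])
  have bb: "norm (bet a b h \<theta> j k) \<le> M" for j k unfolding M_def by (rule bet_bound[OF th])
  define U where "U = (\<integral>\<^sup>+x. ennreal ((cmod (u x))\<^sup>2) \<partial>lborel)"
  define P where "P j x = (\<integral>k. (alph a b h \<theta> j k * F k) * ei ((1/h) * k * x) \<partial>lborel)" for j x
  define Q where "Q j x = (\<integral>k. (bet a b h \<theta> j k * F k) * ei ((- 1/h) * k * x) \<partial>lborel)" for j x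
  define v where "v x = (\<integral>k. F k * ei (k*x/h) \<partial>lborel)" for x
  have [measurable]: "P j \<in> borel_measurable borel" "Q j \<in> borel_measurable borel" for j
  proof -
    have "(\<lambda>x. \<integral>k. (alph a b h \<theta> j k * F k) * ei ((1/h) * k * x) \<partial>lborel) \<in> borel_measurable lborel"
      by measurable
    then show "P j \<in> borel_measurable borel" unfolding P_def[abs_def] by simp
    have "(\<lambda>x. \<integral>k. (bet a b h \<theta> j k * F k) * ei ((- 1/h) * k * x) \<partial>lborel) \<in> borel_measurable lborel"
      by measurable
    then show "Q j \<in> borel_measurable borel" unfolding Q_def[abs_def] by simp
  qed
  have iF: "integrable lborel (\<lambda>k. F k * ei (k*x/h))" for x
    by (rule Bochner_Integration.integrable_bound[where f="\<lambda>k. norm (F k)"]) (auto simp: Fi' norm_mult)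
  have iM: "integrable lborel (\<lambda>k. (m k * F k) * ei (s * k * x))"
    if [measurable]: "m \<in> borel_measurable borel" and mb: "\<And>k. norm (m k) \<le> M" for m s x
  proof (rule Bochner_Integration.integrable_bound[where f="\<lambda>k. M * norm (F k)"])
    show "integrable lborel (\<lambda>k. M * norm (F k))" using Fi' by simp
    show "(\<lambda>k. (m k * F k) * ei (s * k * x)) \<in> borel_measurable lborel" by measurable
    show "AE k in lborel. norm ((m k * F k) * ei (s * k * x)) \<le> norm (M * norm (F k))"
      using M0 by (intro AE_I2) (simp add: norm_mult mult_right_mono mb)
  qed
  have ident: "(\<integral>k. psi a b h \<theta> k x * F k \<partial>lborel) = v x + P (reg a b x) x + Q (reg a b x) x" for x
  proof -
    let ?r = "reg a b x"
    have "(\<integral>k. psi a b h \<theta> k x * F k \<partial>lborel)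
        = (\<integral>k. F k * ei (k*x/h) + (alph a b h \<theta> ?r k * F k) * ei ((1/h) * k * x)
              + (bet a b h \<theta> ?r k * F k) * ei ((- 1/h) * k * x) \<partial>lborel)"
    proof (intro Bochner_Integration.integral_cong refl)
      fix k
      have e1: "(1/h) * k * x = k*x/h" by simp
      have e2: "(- 1/h) * k * x = - k*x/h" by simp
      show "psi a b h \<theta> k x * F k = F k * ei (k*x/h) + (alph a b h \<theta> ?r k * F k) * ei ((1/h) * k * x)
              + (bet a b h \<theta> ?r k * F k) * ei ((- 1/h) * k * x)"
        unfolding e1 e2 psi_decomp by (simp add: algebra_simps)
    qed
    also have "\<dots> = v x + P ?r x + Q ?r x"
      unfolding v_def P_def Q_def
      using iF[of x] iM[of "alph a b h \<theta> ?r" "1/h" x] iM[of "bet a b h \<theta> ?r" "- 1/h" x] ab bb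
      by simp
    finally show ?thesis .
  qed
  have AEinv: "AE x in lborel. v x / complex_of_real c = u x"
    using inversion[OF h um ui Fi] unfolding v_def F_def c_def .
  have AEdiff: "AE x in lborel. Wop a b h \<theta> u x - u x = (P (reg a b x) x + Q (reg a b x) x) / complex_of_real c"
    using AEinv
  proof eventually_elim
    case (elim x)
    have "Wop a b h \<theta> u x = (v x + P (reg a b x) x + Q (reg a b x) x) / complex_of_real c"
      unfolding Wop_def using ident[of x] by (simp add: F_def c_def)
    then show ?case using elim[symmetric] by (simp add: add_divide_distrib)
  qed
  define S where "S x = (\<Sum>j<3. (cmod (P j x))\<^sup>2 + (cmod (Q j x))\<^sup>2)" for x
  have ptw: "(cmod ((P (reg a b x) x + Q (reg a b x) x) / complex_of_real c))\<^sup>2 \<le> 2 / c\<^sup>2 * S x" for x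
  proof -
    let ?r = "reg a b x"
    have r3: "?r \<in> {..<3}" by (simp add: reg_def)
    have "(cmod (P ?r x + Q ?r x))\<^sup>2 \<le> (cmod (P ?r x) + cmod (Q ?r x))\<^sup>2"
      by (intro power_mono norm_triangle_ineq) simp
    also have "\<dots> \<le> 2 * ((cmod (P ?r x))\<^sup>2 + (cmod (Q ?r x))\<^sup>2)"
      using sum_squares_bound[of "cmod (P ?r x)" "cmod (Q ?r x)"] by (simp add: power2_sum)
    also have "(cmod (P ?r x))\<^sup>2 + (cmod (Q ?r x))\<^sup>2 \<le> S x"
      unfolding S_def by (rule member_le_sum[OF r3]) auto
    finally have "(cmod (P ?r x + Q ?r x))\<^sup>2 \<le> 2 * S x" by simp
    then show ?thesis using c by (simp add: norm_divide power_divide divide_right_mono)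
  qed
  have PL2: "(\<integral>\<^sup>+x. ennreal ((cmod (P j x))\<^sup>2) \<partial>lborel) \<le> ennreal (2*pi/\<bar>1/h\<bar> * M\<^sup>2) * U" for j
  proof -
    have "(\<integral>\<^sup>+x. ennreal ((cmod (P j x))\<^sup>2) \<partial>lborel) \<le> ennreal (2*pi/\<bar>1/h\<bar> * M\<^sup>2) * (\<integral>\<^sup>+k. ennreal ((cmod (F k))\<^sup>2) \<partial>lborel)"
      unfolding P_def using h by (intro L2mult[OF _ Fm Fi']) (auto simp: ab)
    also have "\<dots> \<le> ennreal (2*pi/\<bar>1/h\<bar> * M\<^sup>2) * U"
      unfolding U_def F_def by (intro mult_left_mono FT_L2[OF h um ui]) simp
    finally show ?thesis .
  qed
  have QL2: "(\<integral>\<^sup>+x. ennreal ((cmod (Q j x))\<^sup>2) \<partial>lborel) \<le> ennreal (2*pi/\<bar>1/h\<bar> * M\<^sup>2) * U" for j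
  proof -
    have "(\<integral>\<^sup>+x. ennreal ((cmod (Q j x))\<^sup>2) \<partial>lborel) \<le> ennreal (2*pi/\<bar>- 1/h\<bar> * M\<^sup>2) * (\<integral>\<^sup>+k. ennreal ((cmod (F k))\<^sup>2) \<partial>lborel)"
      unfolding Q_def using h by (intro L2mult[OF _ Fm Fi']) (auto simp: bb)
    also have "\<dots> \<le> ennreal (2*pi/\<bar>1/h\<bar> * M\<^sup>2) * U"
    proof -
      have ab': "\<bar>- 1/h\<bar> = \<bar>1/h\<bar>" by simp
      show ?thesis unfolding U_def F_def ab' by (intro mult_left_mono FT_L2[OF h um ui]) simp
    qed
    finally show ?thesis .
  qed
  define A where "A = 2*pi/\<bar>1/h\<bar> * M\<^sup>2"
  have A0: "A \<ge> 0" by (simp add: A_def)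
  have "(\<integral>\<^sup>+x. ennreal ((cmod (Wop a b h \<theta> u x - u x))\<^sup>2) \<partial>lborel) \<le> (\<integral>\<^sup>+x. ennreal (2 / c\<^sup>2) * ennreal (S x) \<partial>lborel)"
    using AEdiff
  proof (intro nn_integral_mono_AE, eventually_elim)
    case (elim x)
    have S0: "S x \<ge> 0" unfolding S_def by (intro sum_nonneg) auto
    show ?case unfolding elim using ptw[of x] S0 c
      by (simp add: ennreal_mult[symmetric] ennreal_leI)
  qed
  also have "\<dots> = ennreal (2 / c\<^sup>2) * (\<integral>\<^sup>+x. ennreal (S x) \<partial>lborel)"
    by (rule nn_integral_cmult) (simp add: S_def)
  also have "(\<integral>\<^sup>+x. ennreal (S x) \<partial>lborel) = (\<Sum>j<3. (\<integral>\<^sup>+x. ennreal ((cmod (P j x))\<^sup>2) \<partial>lborel) + (\<integral>\<^sup>+x. ennreal ((cmod (Q j x))\<^sup>2) \<partial>lborel))"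
  proof -
    have "(\<integral>\<^sup>+x. ennreal (S x) \<partial>lborel) = (\<integral>\<^sup>+x. (\<Sum>j<3. ennreal ((cmod (P j x))\<^sup>2) + ennreal ((cmod (Q j x))\<^sup>2)) \<partial>lborel)"
      unfolding S_def by (intro nn_integral_cong) (simp add: ennreal_plus[symmetric] del: ennreal_plus)
    also have "\<dots> = (\<Sum>j<3. (\<integral>\<^sup>+x. ennreal ((cmod (P j x))\<^sup>2) + ennreal ((cmod (Q j x))\<^sup>2) \<partial>lborel))"
      by (rule nn_integral_sum) simp
    also have "\<dots> = (\<Sum>j<3. (\<integral>\<^sup>+x. ennreal ((cmod (P j x))\<^sup>2) \<partial>lborel) + (\<integral>\<^sup>+x. ennreal ((cmod (Q j x))\<^sup>2) \<partial>lborel))"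
      by (intro sum.cong refl nn_integral_add) auto
    finally show ?thesis .
  qed
  also have "ennreal (2 / c\<^sup>2) * (\<Sum>j<3. (\<integral>\<^sup>+x. ennreal ((cmod (P j x))\<^sup>2) \<partial>lborel) + (\<integral>\<^sup>+x. ennreal ((cmod (Q j x))\<^sup>2) \<partial>lborel))
      \<le> ennreal (2 / c\<^sup>2) * (\<Sum>j<(3::nat). ennreal A * U + ennreal A * U)"
    unfolding A_def by (intro mult_left_mono sum_mono add_mono) (simp_all only: PL2 QL2 zero_le)
  also have "(\<Sum>j<(3::nat). ennreal A * U + ennreal A * U) = ennreal (6 * A) * U"
  proof -
    have "(\<Sum>j<(3::nat). ennreal A * U + ennreal A * U) = of_nat 3 * (ennreal A * U + ennreal A * U)"
      by simp
    also have "\<dots> = of_nat 3 * (2 * (ennreal A * U))"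
      by (simp only: mult_2[symmetric])
    also have "\<dots> = 6 * (ennreal A * U)"
      by (simp add: mult.assoc[symmetric])
    also have "\<dots> = ennreal 6 * (ennreal A * U)"
      by simp
    also have "\<dots> = ennreal (6 * A) * U" using A0 by (simp add: ennreal_mult mult.assoc)
    finally show ?thesis .
  qed
  also have "ennreal (2 / c\<^sup>2) * (ennreal (6 * A) * U) = ennreal (12 * M\<^sup>2) * U"
  proof -
    have "2 / c\<^sup>2 * (6 * A) = 12 * M\<^sup>2" unfolding A_def c2 using h by (simp add: field_simps)
    then show ?thesis using A0 c by (simp add: ennreal_mult[symmetric] mult.assoc[symmetric])
  qed
  also have "\<dots> \<le> ennreal ((70 * cmod \<theta>)\<^sup>2) * U"
    by (intro mult_right_mono ennreal_leI) (simp_all add: M_def power_mult_distrib)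
  finally show ?thesis unfolding U_def .
qed

theorem lemma2p1:
  fixes a b :: real
  assumes "a < b"
  shows "\<exists>c0 C. c0 > 0 \<and> C > 0 \<and>
    (\<forall>h::real. h > 0 \<longrightarrow> (\<forall>\<theta>::complex. cmod \<theta> \<le> c0 \<longrightarrow>
      (\<forall>u :: real \<Rightarrow> complex.
         integrable lborel u \<and> u \<in> borel_measurable lborel \<and>
         (\<integral>\<^sup>+ x. ennreal ((cmod (u x))\<^sup>2) \<partial>lborel) < \<infinity> \<and>
         integrable lborel (hFT h u) \<longrightarrow>
           (\<lambda>x. Wop a b h \<theta> u x - u x) \<in> borel_measurable lborel \<and>
           (\<integral>\<^sup>+ x. ennreal ((cmod (Wop a b h \<theta> u x - u x))\<^sup>2) \<partial>lborel)
             \<le> ennreal ((C * cmod \<theta>)\<^sup>2) * (\<integral>\<^sup>+ x. ennreal ((cmod (u x))\<^sup>2) \<partial>lborel))))"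
proof (intro exI conjI allI impI)
  show "(1/16::real) > 0" by simp
  show "(70::real) > 0" by simp
  fix h :: real and \<theta> :: complex and u :: "real \<Rightarrow> complex"
  assume h: "h > 0" and th: "cmod \<theta> \<le> 1/16"
  assume hyp: "integrable lborel u \<and> u \<in> borel_measurable lborel \<and>
         (\<integral>\<^sup>+ x. ennreal ((cmod (u x))\<^sup>2) \<partial>lborel) < \<infinity> \<and>
         integrable lborel (hFT h u)"
  then have ui: "integrable lborel u" and um: "u \<in> borel_measurable borel"
    and Fi: "integrable lborel (hFT h u)" by auto
  have [measurable]: "Wop a b h \<theta> u \<in> borel_measurable borel" by (rule Wop_meas[OF um])
  have [measurable]: "u \<in> borel_measurable borel" by (rule um)
  show "(\<lambda>x. Wop a b h \<theta> u x - u x) \<in> borel_measurable lborel" by measurable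
  show "(\<integral>\<^sup>+ x. ennreal ((cmod (Wop a b h \<theta> u x - u x))\<^sup>2) \<partial>lborel)
      \<le> ennreal ((70 * cmod \<theta>)\<^sup>2) * (\<integral>\<^sup>+ x. ennreal ((cmod (u x))\<^sup>2) \<partial>lborel)"
    by (rule main_bound[OF h th um ui Fi])
qed

end
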